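(* Let $c>0$, $D>0$, $k>0$, and let $u(\theta,\varphi,t)$ be the solution described in the context, where the angular power spectrum $\{C_l,\ l=0,1,2,\dots\}$ of the initial field $T$ satisfies \[ \sum_{l=0}^{\infty }(2l+1)^3C_{l}<\infty. \] Then there exists a constant $C$, depending only on $c$, $D$ and $k$, such that for all $t>0$ \[ \|u(\theta ,\varphi ,t+h)-u(\theta ,\varphi ,t)\|_{L_2(\Omega \times\mathbb S^{2})} \le Ch\quad\text{as } h\to 0+. \]
   Context: On the unit sphere with coordinates $(\theta,\varphi)\in[0,\pi)\times[0,2\pi)$ and measure $\sin\theta\,d\theta\,d\varphi$, $Y_{lm}(\theta,\varphi)=d_{lm}e^{im\varphi}P_l^m(\cos\theta)$, $d_{lm}=(-1)^m\big[\frac{(2l+1)(l-m)!}{4\pi(l+m)!}\big]^{1/2}$, are complex spherical harmonics; $\mathbf 0$ denotes $\theta=\varphi=0$. $T=\sum_{l,m}a_{lm}Y_{lm}$ is a real Gaussian isotropic field with $a_{lm}$ complex Gaussian, $a_{lm}=(-1)^ma_{l,-m}$, $\mathbf E a_{lm}=0$, $\mathbf Ea_{lm}\overline{a_{l'm'}}=\delta_l^{l'}\delta_m^{m'}C_l$, independent for $m\ne-m'$. The solution of $\frac1{c^2}u_{tt}+\frac1Du_t=k^2\Delta_{(\theta,\varphi)}u$ ($\Delta_{(\theta,\varphi)}$ the Laplace–Beltrami operator), $u|_{t=0}=T$, $u_t|_{t=0}=0$, is $u(\theta,\varphi,t)=\exp(-\frac{c^2t}{2D})\sum_{l\ge0}\sum_{m=-l}^lY_{lm}(\theta,\varphi)\xi_{lm}(t)$,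 with $\xi_{lm}(t)=\sqrt{\frac{4\pi}{2l+1}}a_{lm}\overline{Y_{l0}(\mathbf 0)}[A_l(t)+B_l(t)]$, $A_l(t)=[\cosh(tK_l)+\frac{c^2}{2DK_l}\sinh(tK_l)]\mathbf 1_{\{l\le l^*\}}$, $B_l(t)=[\cos(tK_l')+\frac{c^2}{2DK_l'}\sin(tK_l')]\mathbf 1_{\{l>l^*\}}$, $K_l=\sqrt{\frac{c^4}{4D^2}-c^2l(l+1)k^2}$, $K_l'=\sqrt{c^2l(l+1)k^2-\frac{c^4}{4D^2}}$, $l^*=\frac{\sqrt{D^2k^2+c^2}-Dk}{2Dk}$ (with $\sinh(tK_l)/K_l:=t$ if $K_l=0$). $\|X\|_{L_2(\Omega\times\mathbb S^2)}=(\mathbf E\int_{\mathbb S^2}|X|^2\sin\theta\,d\theta\,d\varphi)^{1/2}$. *)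

theory Defs
  imports "HOL-Probability.Probability" "HOL-Computational_Algebra.Polynomial"
begin

definition legendre_poly :: "nat \<Rightarrow> real poly" where
  "legendre_poly l = smult (1 / (2 ^ l * fact l)) ((pderiv ^^ l) ([:-1, 0, 1:] ^ l))"

text \<open>Associated Legendre function P_l^m (no Condon-Shortley phase; the sign (-1)^m
  is contained in the normalising constant d_lm), extended to negative m by
  P_l^{-m} = (-1)^m (l-m)!/(l+m)! P_l^m.\<close>
definition assoc_legendre :: "nat \<Rightarrow> int \<Rightarrow> real \<Rightarrow> real" where
  "assoc_legendre l m x =
     (let n = nat \<bar>m\<bar>;
          p = sqrt (1 - x\<^sup>2) ^ n * poly ((pderiv ^^ n) (legendre_poly l)) x
      in if 0 \<le> m then p else (-1) ^ n * fact (l - n) / fact (l + n) * p)"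

definition sh_const :: "nat \<Rightarrow> int \<Rightarrow> real" where
  "sh_const l m = (-1) ^ nat \<bar>m\<bar> *
     sqrt ((2 * real l + 1) * fact (nat (int l - m)) / (4 * pi * fact (nat (int l + m))))"

definition sph_harm :: "nat \<Rightarrow> int \<Rightarrow> real \<Rightarrow> real \<Rightarrow> complex" where
  "sph_harm l m \<theta> \<phi> = complex_of_real (sh_const l m) * cis (real_of_int m * \<phi>)
                        * complex_of_real (assoc_legendre l m (cos \<theta>))"

text \<open>Real field:
  a_{l,-m} = (-1)^m conj(a_lm); the family of Re a_l0, Re a_lm, Im a_lm (1 \<le> m \<le> l)
  is independent centred Gaussian with variances C_l, C_l/2, C_l/2, so that
  E a_lm conj(a_l'm') = \<delta> \<delta> C_l.\<close>
definition gaussian_isotropic_coeffs ::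
  "'a measure \<Rightarrow> (nat \<Rightarrow> real) \<Rightarrow> (nat \<Rightarrow> int \<Rightarrow> 'a \<Rightarrow> complex) \<Rightarrow> bool" where
  "gaussian_isotropic_coeffs M C a \<longleftrightarrow>
     prob_space M \<and> (\<forall>l. 0 \<le> C l) \<and>
     (\<forall>l m. a l m \<in> borel_measurable M) \<and>
     (\<forall>l m. \<bar>m\<bar> \<le> int l \<longrightarrow>
        (\<forall>\<omega>\<in>space M. a l (- m) \<omega> = (-1) ^ nat \<bar>m\<bar> * cnj (a l m \<omega>))) \<and>
     prob_space.indep_vars M (\<lambda>_. borel)
        (\<lambda>(l, m, b) \<omega>. if b then Re (a l m \<omega>) else Im (a l m \<omega>))
        {(l, m, b). 0 \<le> m \<and> m \<le> int l \<and> (m = 0 \<longrightarrow> b)} \<and>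
     (\<forall>l m. C l = 0 \<longrightarrow> (AE \<omega> in M. a l m \<omega> = 0)) \<and>
     (\<forall>l. 0 < C l \<longrightarrow>
        distributed M lborel (\<lambda>\<omega>. Re (a l 0 \<omega>)) (normal_density 0 (sqrt (C l)))) \<and>
     (\<forall>l m. 0 < C l \<and> 1 \<le> m \<and> m \<le> int l \<longrightarrow>
        distributed M lborel (\<lambda>\<omega>. Re (a l m \<omega>)) (normal_density 0 (sqrt (C l / 2))) \<and>
        distributed M lborel (\<lambda>\<omega>. Im (a l m \<omega>)) (normal_density 0 (sqrt (C l / 2))))"

definition shc :: "real \<Rightarrow> real \<Rightarrow> real" where
  "shc t K = (if K = 0 then t else sinh (t * K) / K)"

definition lstar :: "real \<Rightarrow> real \<Rightarrow> real \<Rightarrow> real" where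
  "lstar c D k = (sqrt (D\<^sup>2 * k\<^sup>2 + c\<^sup>2) - D * k) / (2 * D * k)"

definition Kl :: "real \<Rightarrow> real \<Rightarrow> real \<Rightarrow> nat \<Rightarrow> real" where
  "Kl c D k l = sqrt (c ^ 4 / (4 * D\<^sup>2) - c\<^sup>2 * real l * (real l + 1) * k\<^sup>2)"

definition Kl' :: "real \<Rightarrow> real \<Rightarrow> real \<Rightarrow> nat \<Rightarrow> real" where
  "Kl' c D k l = sqrt (c\<^sup>2 * real l * (real l + 1) * k\<^sup>2 - c ^ 4 / (4 * D\<^sup>2))"

definition Al :: "real \<Rightarrow> real \<Rightarrow> real \<Rightarrow> nat \<Rightarrow> real \<Rightarrow> real" where
  "Al c D k l t = (if real l \<le> lstar c D k
      then cosh (t * Kl c D k l) + c\<^sup>2 / (2 * D) * shc t (Kl c D k l) else 0)"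

definition Bl :: "real \<Rightarrow> real \<Rightarrow> real \<Rightarrow> nat \<Rightarrow> real \<Rightarrow> real" where
  "Bl c D k l t = (if real l > lstar c D k
      then cos (t * Kl' c D k l) + c\<^sup>2 / (2 * D * Kl' c D k l) * sin (t * Kl' c D k l) else 0)"

definition xi :: "(nat \<Rightarrow> int \<Rightarrow> 'a \<Rightarrow> complex) \<Rightarrow> real \<Rightarrow> real \<Rightarrow> real \<Rightarrow> nat \<Rightarrow> int \<Rightarrow> real \<Rightarrow> 'a \<Rightarrow> complex" where
  "xi a c D k l m t \<omega> = complex_of_real (sqrt (4 * pi / (2 * real l + 1))) * a l m \<omega>
      * cnj (sph_harm l 0 0 0) * complex_of_real (Al c D k l t + Bl c D k l t)"

definition sol :: "(nat \<Rightarrow> int \<Rightarrow> 'a \<Rightarrow> complex) \<Rightarrow> real \<Rightarrow> real \<Rightarrow> real \<Rightarrow> real \<Rightarrow> real \<Rightarrow> real \<Rightarrow> 'a \<Rightarrow> complex" where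
  "sol a c D k \<theta> \<phi> t \<omega> = complex_of_real (exp (- (c\<^sup>2 * t) / (2 * D))) *
      (\<Sum>l. \<Sum>m\<in>{- int l..int l}. sph_harm l m \<theta> \<phi> * xi a c D k l m t \<omega>)"

definition L2_sphere_norm :: "'a measure \<Rightarrow> (real \<Rightarrow> real \<Rightarrow> 'a \<Rightarrow> complex) \<Rightarrow> ennreal" where
  "L2_sphere_norm M X =
     (let I = (\<integral>\<^sup>+ \<omega>. (\<integral>\<^sup>+ p. indicator ({0..<pi} \<times> {0..<2 * pi}) p *
                  ennreal ((cmod (X (fst p) (snd p) \<omega>))\<^sup>2 * sin (fst p)) \<partial>lborel) \<partial>M)
      in if I = \<infinity> then \<infinity> else ennreal (sqrt (enn2real I)))"

end

theory Submission
  imports Defs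
begin


definition PInt :: "real poly \<Rightarrow> real" where
  "PInt q = integral {-1..1} (poly q)"

lemma cont_poly: "continuous_on A (poly (p :: real poly))"
  using continuous_on_poly[OF continuous_on_id, of A p] by simp

lemma PInt_integrable: "poly (p :: real poly) integrable_on {-1..1}"
  by (rule integrable_continuous_interval[OF cont_poly])

lemma PInt_add: "PInt (p + q) = PInt p + PInt q"
  unfolding PInt_def by (simp add: poly_add[abs_def] integral_add PInt_integrable)

lemma PInt_diff: "PInt (p - q) = PInt p - PInt q"
  unfolding PInt_def by (simp add: poly_diff[abs_def] integral_diff PInt_integrable)

lemma PInt_smult: "PInt (smult c p) = c * PInt p"
proof -
  have "poly (smult c p) = (\<lambda>x. c * poly p x)" by (rule ext) simp
  then show ?thesis unfolding PInt_def by simp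
qed

lemma PInt_minus: "PInt (- p) = - PInt p"
  unfolding PInt_def by (simp add: poly_minus[abs_def] integral_neg PInt_integrable)

lemma PInt_pderiv: "PInt (pderiv p) = poly p 1 - poly p (-1)"
proof -
  have "(poly (pderiv p) has_integral poly p 1 - poly p (-1)) {-1..1}"
    apply (rule fundamental_theorem_of_calculus)
     apply simp
    apply (rule has_real_derivative_iff_has_vector_derivative[THEN iffD1])
    apply (rule DERIV_subset[OF poly_DERIV])
    by simp
  then show ?thesis unfolding PInt_def by (rule integral_unique)
qed

lemma PInt_parts:
  "PInt (p * pderiv r) = poly (p * r) 1 - poly (p * r) (-1) - PInt (pderiv p * r)"
proof -
  have "PInt (pderiv (p * r)) = PInt (p * pderiv r) + PInt (pderiv p * r)"
    by (simp add: pderiv_mult PInt_add mult.commute)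
  then show ?thesis using PInt_pderiv[of "p*r"] by simp
qed

lemma PInt_const: "PInt [:c:] = 2 * c"
proof -
  have "poly [:c:] = (\<lambda>x. c)" by (rule ext) simp
  then show ?thesis unfolding PInt_def by simp
qed

definition X2 :: "real poly" where "X2 = [:-1, 0, 1:]"
definition Y2 :: "real poly" where "Y2 = [:1, 0, -1:]"
definition Dn :: "nat \<Rightarrow> real poly \<Rightarrow> real poly" where "Dn j p = (pderiv ^^ j) p"
abbreviation QQ :: "nat \<Rightarrow> real poly" where "QQ l \<equiv> X2 ^ l"

lemma Dn_0[simp]: "Dn 0 p = p" by (simp add: Dn_def)
lemma Dn_Suc: "Dn (Suc j) p = pderiv (Dn j p)" by (simp add: Dn_def)
lemma Dn_add: "Dn i (Dn j p) = Dn (i + j) p" by (simp add: Dn_def funpow_add)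
lemma Dn_smult: "Dn j (smult c p) = smult c (Dn j p)"
  by (induction j) (simp_all add: Dn_Suc pderiv_smult)

lemma poly_X2[simp]: "poly X2 x = x^2 - 1" by (simp add: X2_def power2_eq_square)
lemma poly_Y2[simp]: "poly Y2 x = 1 - x^2" by (simp add: Y2_def power2_eq_square)
lemma pderiv_X2: "pderiv X2 = [:0, 2:]" by (simp add: X2_def pderiv_pCons)
lemma pderiv_Y2: "pderiv Y2 = [:0, -2:]" by (simp add: Y2_def pderiv_pCons)

lemma Dn_QQ_factor:
  "j \<le> l \<Longrightarrow> \<exists>R. Dn j (QQ l) = X2 ^ (l - j) * R \<and> poly R 1 = 2 ^ j * fact l / fact (l - j)"
proof (induction j)
  case 0 then show ?case by (intro exI[of _ 1]) simp
next
  case (Suc j)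
  then obtain R where R: "Dn j (QQ l) = X2 ^ (l - j) * R" "poly R 1 = 2 ^ j * fact l / fact (l - j)"
    by auto
  obtain n where n: "l - j = Suc n" using Suc.prems by (metis Suc_diff_le diff_Suc_Suc le_SucE less_eq_Suc_le not_less_eq_eq)
  have nl: "l - Suc j = n" using n by simp
  define R' where "R' = X2 * pderiv R + smult (of_nat (Suc n)) ([:0,2:] * R)"
  have "Dn (Suc j) (QQ l) = X2 ^ n * R'"
    unfolding Dn_Suc R(1) n R'_def
    by (simp only: pderiv_mult pderiv_power_Suc pderiv_X2) (simp add: algebra_simps)
  moreover have "poly R' 1 = 2 ^ Suc j * fact l / fact (l - Suc j)"
  proof -
    have "poly R' 1 = 2 * real (Suc n) * poly R 1" by (simp add: R'_def)
    also have "\<dots> = 2 * real (Suc n) * (2 ^ j * fact l / fact (Suc n))" using R(2) n by simp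
    also have "\<dots> = 2 ^ Suc j * fact l / fact n"
    proof -
      have "fact (Suc n) = (real n + 1) * (fact n :: real)" by simp
      moreover have "(fact n :: real) > 0" by simp
      ultimately show ?thesis by (simp add: divide_simps)
    qed
    finally show ?thesis using nl by simp
  qed
  ultimately show ?case unfolding nl by blast
qed

lemma Dn_QQ_vanish:
  assumes "j < l" shows "poly (Dn j (QQ l)) 1 = 0" "poly (Dn j (QQ l)) (-1) = 0"
proof -
  obtain R where R: "Dn j (QQ l) = X2 ^ (l - j) * R" using Dn_QQ_factor[of j l] assms by auto
  have "l - j \<noteq> 0" using assms by simp
  then show "poly (Dn j (QQ l)) 1 = 0" "poly (Dn j (QQ l)) (-1) = 0"
    unfolding R by (simp_all add: power_0_left)
qed

lemma Dn_QQ_at1: "poly (Dn l (QQ l)) 1 = 2 ^ l * fact l"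
proof -
  obtain R where R: "Dn l (QQ l) = X2 ^ (l - l) * R" "poly R 1 = 2 ^ l * fact l / fact (l - l)"
    using Dn_QQ_factor[of l l] by auto
  then show ?thesis by simp
qed


lemma pderiv_Dn: "pderiv (Dn j p) = Dn (Suc j) p" by (simp add: Dn_Suc)

lemma poly_ext: "(\<And>x. poly p x = poly q x) \<Longrightarrow> p = (q :: real poly)"
  using poly_eq_poly_eq_iff[of p q] by auto

definition EE :: "nat \<Rightarrow> nat \<Rightarrow> real poly" where
  "EE l j = X2 * Dn (Suc (Suc j)) (QQ l) + smult (2 * (real j + 1) - 2 * real l) ([:0,1:] * Dn (Suc j) (QQ l))
           + smult ((real j + 1) * (real j - 2 * real l)) (Dn j (QQ l))"

lemma E0: "X2 * Dn (Suc 0) (QQ l) - smult (2 * real l) ([:0,1:] * QQ l) = 0"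
proof (cases l)
  case 0 then show ?thesis by (simp add: Dn_Suc)
next
  case (Suc n)
  show ?thesis unfolding Suc Dn_Suc Dn_0 pderiv_power_Suc pderiv_X2
    by (rule poly_ext) (simp add: algebra_simps)
qed

lemma EE_zero: "EE l j = 0"
proof (induction j)
  case 0
  have "pderiv (X2 * Dn (Suc 0) (QQ l) - smult (2 * real l) ([:0,1:] * QQ l)) = EE l 0"
    unfolding EE_def
    by (rule poly_ext) (simp add: pderiv_mult pderiv_Dn pderiv_X2 pderiv_pCons pderiv_diff pderiv_add pderiv_smult algebra_simps Dn_Suc[of 0 "QQ l", simplified, symmetric])
  then show ?case using E0[of l] by simp
next
  case (Suc j)
  have "pderiv (EE l j) = EE l (Suc j)"
    unfolding EE_def
    by (rule poly_ext) (simp add: pderiv_mult pderiv_Dn pderiv_X2 pderiv_pCons pderiv_add pderiv_smult algebra_simps)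
  then show ?case using Suc by simp
qed


lemma deriv_id:
  "pderiv (Y2 ^ Suc n * Dn (Suc (l + n)) (QQ l))
     = smult (- (real l + real n + 1) * (real l - real n)) (Y2 ^ n * Dn (l + n) (QQ l))"
proof (rule poly_ext)
  fix x :: real
  define d0 where "d0 = poly (Dn (l + n) (QQ l)) x"
  define d1 where "d1 = poly (Dn (Suc (l + n)) (QQ l)) x"
  define d2 where "d2 = poly (Dn (Suc (Suc (l + n))) (QQ l)) x"
  define y where "y = 1 - x^2"
  have h: "(x^2 - 1) * d2 + (2 * (real (l+n) + 1) - 2 * real l) * (x * d1)
           + (real (l+n) + 1) * (real (l+n) - 2 * real l) * d0 = 0"
    using arg_cong[OF EE_zero[of l "l+n"], of "\<lambda>p. poly p x"]
    unfolding EE_def d0_def d1_def d2_def by (simp add: algebra_simps)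
  have h2: "y * d2 = (2 * real n + 2) * x * d1 + (real l + real n + 1) * (real n - real l) * d0"
    using h unfolding y_def by (simp add: algebra_simps)
  have "poly (pderiv (Y2 ^ Suc n * Dn (Suc (l + n)) (QQ l))) x
        = (real n + 1) * y^n * (-2 * x) * d1 + y^n * (y * d2)"
    unfolding d1_def d2_def y_def
    by (simp only: pderiv_mult pderiv_power_Suc pderiv_Y2 pderiv_Dn) (simp add: algebra_simps)
  also have "\<dots> = y^n * ((real l + real n + 1) * (real n - real l) * d0)"
    unfolding h2 by (simp add: algebra_simps)
  also have "\<dots> = poly (smult (- (real l + real n + 1) * (real l - real n)) (Y2 ^ n * Dn (l + n) (QQ l))) x"
    unfolding d0_def y_def by (simp add: algebra_simps)
  finally show "poly (pderiv (Y2 ^ Suc n * Dn (Suc (l + n)) (QQ l))) x = \<dots>" .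
qed

definition JJ :: "nat \<Rightarrow> nat \<Rightarrow> real" where
  "JJ l n = PInt (Y2 ^ n * (Dn (l + n) (QQ l))\<^sup>2)"

lemma poly_Y2_pm1: "poly Y2 1 = 0" "poly Y2 (-1) = 0" by simp_all

lemma JJ_rec: "JJ l (Suc n) = (real l + real n + 1) * (real l - real n) * JJ l n"
proof -
  let ?W = "Y2 ^ Suc n * Dn (Suc (l + n)) (QQ l)"
  have "JJ l (Suc n) = PInt (?W * pderiv (Dn (l + n) (QQ l)))"
    unfolding JJ_def by (simp add: pderiv_Dn power2_eq_square algebra_simps)
  also have "\<dots> = - PInt (pderiv ?W * Dn (l + n) (QQ l))"
    by (subst PInt_parts) (simp add: power_0_left)
  also have "\<dots> = (real l + real n + 1) * (real l - real n) * JJ l n"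
    unfolding deriv_id JJ_def by (simp add: PInt_smult power2_eq_square algebra_simps)
  finally show ?thesis .
qed

lemma JJ_closed: "n \<le> l \<Longrightarrow> JJ l n = JJ l 0 * fact (l + n) / fact (l - n)"
proof (induction n)
  case 0 then show ?case by simp
next
  case (Suc n)
  then have IH: "JJ l n = JJ l 0 * fact (l + n) / fact (l - n)" by simp
  obtain k where k: "l - n = Suc k" using Suc.prems by (metis Suc_diff_le Suc_le_lessD diff_Suc_Suc)
  have kk: "l - Suc n = k" using k by simp
  have lk: "real l - real n = real k + 1" using k Suc.prems by linarith
  have "JJ l (Suc n) = (real l + real n + 1) * (real k + 1) * (JJ l 0 * fact (l + n) / fact (Suc k))"
    using JJ_rec[of l n] IH k lk by simp
  also have "\<dots> = JJ l 0 * fact (l + Suc n) / fact k"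
  proof -
    have e1: "fact (l + Suc n) = (real l + real n + 1) * (fact (l + n) :: real)"
      by (simp add: algebra_simps)
    have e2: "fact (Suc k) = (real k + 1) * (fact k :: real)" by simp
    have fk: "(fact k :: real) > 0" by simp
    have k1: "real k + 1 \<noteq> 0" by linarith
    show ?thesis unfolding e1 e2 using fk k1 by (simp add: divide_simps)
  qed
  finally show ?case unfolding kk .
qed


lemma PInt_parts_iter:
  "j \<le> l \<Longrightarrow> PInt (Dn l (QQ l) * Dn l (QQ l)) = (-1)^j * PInt (Dn (l + j) (QQ l) * Dn (l - j) (QQ l))"
proof (induction j)
  case 0 then show ?case by simp
next
  case (Suc j)
  then have IH: "PInt (Dn l (QQ l) * Dn l (QQ l)) = (-1)^j * PInt (Dn (l + j) (QQ l) * Dn (l - j) (QQ l))"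
    by simp
  obtain k where k: "l - j = Suc k" using Suc.prems by (metis Suc_diff_le Suc_le_lessD diff_Suc_Suc)
  have kk: "l - Suc j = k" using k by simp
  have kl: "k < l" using k by simp
  have "PInt (Dn (l + j) (QQ l) * Dn (l - j) (QQ l)) = PInt (Dn (l + j) (QQ l) * pderiv (Dn k (QQ l)))"
    unfolding k pderiv_Dn ..
  also have "\<dots> = - PInt (Dn (l + Suc j) (QQ l) * Dn (l - Suc j) (QQ l))"
    by (subst PInt_parts) (simp add: pderiv_Dn Dn_QQ_vanish[OF kl] kk)
  finally show ?case using IH by simp
qed

lemma coeff_Dn: "coeff (Dn j p) i = pochhammer (real i + 1) j * coeff p (i + j)"
proof (induction j arbitrary: i)
  case 0 then show ?case by simp
next
  case (Suc j)
  show ?case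
    by (simp add: Dn_Suc coeff_pderiv Suc pochhammer_rec algebra_simps)
qed

lemma degree_X2: "degree X2 = 2" by (simp add: X2_def)
lemma lead_X2: "lead_coeff X2 = 1" by (simp add: X2_def)

lemma Dn_top: "Dn (2 * l) (QQ l) = [:fact (2 * l):]"
proof -
  have X0: "X2 \<noteq> 0" by (simp add: X2_def)
  have dg: "degree (QQ l) = 2 * l" by (simp add: degree_power_eq X0 degree_X2)
  have lc: "coeff (QQ l) (2 * l) = 1" using lead_coeff_power[of X2 l] dg lead_X2 by simp
  show ?thesis
  proof (rule poly_eqI)
    fix i
    show "coeff (Dn (2 * l) (QQ l)) i = coeff [:fact (2 * l):] i"
    proof (cases i)
      case 0 then show ?thesis by (simp add: coeff_Dn lc pochhammer_fact)
    next
      case (Suc m)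
      have "coeff (QQ l) (i + 2 * l) = 0" using dg Suc by (intro coeff_eq_0) simp
      then show ?thesis using Suc by (simp add: coeff_Dn)
    qed
  qed
qed

definition II :: "nat \<Rightarrow> real" where "II n = PInt (QQ n)"

lemma II_rec: "(2 * real n + 3) * II (Suc n) = - 2 * (real n + 1) * II n"
proof -
  have pd: "pderiv (QQ (Suc n)) * [:0,1:] = smult (2 * (real n + 1)) (QQ (Suc n) + QQ n)"
    by (rule poly_ext) (simp only: pderiv_power_Suc pderiv_X2, simp add: algebra_simps power2_eq_square)
  have "II (Suc n) = PInt (QQ (Suc n) * pderiv [:0,1:])" unfolding II_def by (simp add: pderiv_pCons)
  also have "\<dots> = - PInt (pderiv (QQ (Suc n)) * [:0,1:])"
    by (subst PInt_parts) simp
  also have "\<dots> = - 2 * (real n + 1) * (II (Suc n) + II n)"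
    unfolding pd II_def by (simp add: PInt_smult PInt_add algebra_simps)
  finally show ?thesis by (simp add: algebra_simps)
qed

lemma II_aux:
  fixes F f a :: real and s :: real
  assumes "F > 0" "a \<ge> 0"
  shows "- 2 * (a + 1) * (s * 2 * f ^ 2 / F) / (2 * a + 3)
       = (- s) * (2 * 2 * 2) * ((a + 1) * f) ^ 2 / ((2 * a + 3) * (2 * a + 2) * F)"
proof -
  have d: "2 * a + 3 \<noteq> 0" "2 * a + 2 \<noteq> 0" "F \<noteq> 0" using assms by auto
  have e: "(2 * a + 3) * (2 * a + 2) * F \<noteq> 0" using d by simp
  show ?thesis
    apply (subst frac_eq_eq)
    using d e apply simp_all
    apply (simp add: algebra_simps power2_eq_square)
    done
qed

lemma II_closed: "II n = (-1)^n * 2^(2*n+1) * fact n ^ 2 / fact (2*n+1)"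
proof (induction n)
  case 0
  have "PInt 1 = 2" using PInt_const[of 1] by (metis one_pCons mult.right_neutral)
  then show ?case by (simp add: II_def)
next
  case (Suc n)
  have h: "II (Suc n) = - 2 * (real n + 1) * II n / (2 * real n + 3)"
    using II_rec[of n] by (simp add: field_simps)
  have f1: "fact (2 * Suc n + 1) = (2 * real n + 3) * (2 * real n + 2) * (fact (2*n+1) :: real)"
  proof -
    have "2 * Suc n + 1 = Suc (Suc (2*n+1))" by simp
    then show ?thesis by (simp only:) (simp add: algebra_simps)
  qed
  have f2: "fact (Suc n) = (real n + 1) * (fact n :: real)" by simp
  have p: "2 ^ (2 * Suc n + 1) = (2 * 2 * 2 :: real) * 2 ^ (2 * n)" by (simp add: power_add)
  have p2: "2 ^ (2 * n + 1) = (2 :: real) * 2 ^ (2 * n)" by simp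
  have m: "(-1::real) ^ Suc n = - ((-1) ^ n)" by simp
  have pos: "(fact (2*n+1) :: real) > 0" by simp
  show ?case unfolding h Suc f1 f2 p m
    using II_aux[OF pos, of "real n" "(-1)^n * 2 ^ (2*n)" "fact n"] unfolding p2
    by (simp add: algebra_simps)
qed

lemma JJ0: "JJ l 0 = 2^(2*l+1) * fact l ^ 2 / (2 * real l + 1)"
proof -
  have "JJ l 0 = PInt (Dn l (QQ l) * Dn l (QQ l))" unfolding JJ_def by (simp add: power2_eq_square)
  also have "\<dots> = (-1)^l * PInt (Dn (2 * l) (QQ l) * QQ l)"
    using PInt_parts_iter[of l l] by (simp add: mult_2)
  also have "\<dots> = (-1)^l * fact (2*l) * II l"
    unfolding Dn_top II_def by (simp add: PInt_smult)
  also have "\<dots> = 2^(2*l+1) * fact l ^ 2 / (2 * real l + 1)"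
  proof -
    have f: "fact (2*l+1) = (2 * real l + 1) * (fact (2*l) :: real)" by simp
    have pos: "(fact (2*l) :: real) > 0" by simp
    have m: "(-1::real)^l * (-1)^l = 1" by (simp flip: power_mult_distrib)
    define X :: real where "X = 2^(2*l+1) * fact l ^ 2"
    have "(-1)^l * fact (2*l) * II l = ((-1)^l * (-1)^l) * (fact (2*l) * (X / ((2 * real l + 1) * fact (2*l))))"
      unfolding II_closed f X_def by (simp add: algebra_simps)
    also have "\<dots> = X / (2 * real l + 1)" using pos unfolding m by simp
    finally show ?thesis unfolding X_def .
  qed
  finally show ?thesis .
qed

lemma legendre_Dn: "Dn n (legendre_poly l) = smult (1 / (2 ^ l * fact l)) (Dn (l + n) (QQ l))"
  unfolding legendre_poly_def by (simp add: Dn_def[symmetric] X2_def[symmetric] Dn_smult Dn_add add.commute)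

lemma legendre_norm:
  assumes "n \<le> l"
  shows "PInt (Y2 ^ n * (Dn n (legendre_poly l))\<^sup>2) = 2 * fact (l + n) / ((2 * real l + 1) * fact (l - n))"
proof -
  have "PInt (Y2 ^ n * (Dn n (legendre_poly l))\<^sup>2) = (1 / (2 ^ l * fact l))^2 * JJ l n"
    unfolding legendre_Dn JJ_def by (simp add: power2_eq_square PInt_smult algebra_simps)
  also have "\<dots> = 2 * fact (l + n) / ((2 * real l + 1) * fact (l - n))"
    unfolding JJ_closed[OF assms] JJ0
    by (simp add: field_simps power2_eq_square power_add power_mult)
  finally show ?thesis .
qed

lemma legendre_at1: "poly (legendre_poly l) 1 = 1"
  using legendre_Dn[of 0 l] Dn_QQ_at1[of l] by simp


lemma shc_deriv: "((\<lambda>t. shc t K) has_real_derivative cosh (t * K)) (at t)"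
proof (cases "K = 0")
  case True
  then show ?thesis unfolding shc_def by (auto intro!: derivative_eq_intros)
next
  case False
  then show ?thesis unfolding shc_def
    by (auto intro!: derivative_eq_intros simp: field_simps)
qed

lemma cosh_deriv: "((\<lambda>t. cosh (t * K)) has_real_derivative K^2 * shc t K) (at t)"
proof (cases "K = 0")
  case True
  then show ?thesis unfolding shc_def by (auto intro!: derivative_eq_intros)
next
  case False
  then show ?thesis unfolding shc_def
    by (auto intro!: derivative_eq_intros simp: field_simps power2_eq_square)
qed

lemma sinh_le: "0 \<le> y \<Longrightarrow> sinh y \<le> y * exp (y::real)"
proof -
  assume y: "0 \<le> y"
  have "1 - 2 * y \<le> exp (- 2 * y)" using exp_ge_add_one_self[of "-2*y"] by simp
  then have "exp y * (1 - 2 * y) \<le> exp y * exp (- 2 * y)" by (simp add: mult_left_mono)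
  also have "exp y * exp (-2 * y) = exp (- y)" by (simp flip: exp_add)
  finally show ?thesis unfolding sinh_def by (simp add: algebra_simps)
qed

lemma shc_bound: "0 \<le> t \<Longrightarrow> 0 \<le> K \<Longrightarrow> shc t K \<le> t * exp (t * K)"
proof (cases "K = 0")
  case True then show ?thesis by (simp add: shc_def)
next
  case False
  assume t: "0 \<le> t" and K: "0 \<le> K"
  then have Kp: "K > 0" using False by simp
  have "sinh (t * K) \<le> (t * K) * exp (t * K)" using sinh_le[of "t*K"] t K by simp
  then show ?thesis unfolding shc_def using False Kp by (simp add: divide_simps algebra_simps)
qed

lemma shc_nonneg: "0 \<le> t \<Longrightarrow> 0 \<le> K \<Longrightarrow> 0 \<le> shc t K"
  unfolding shc_def by (auto intro!: divide_nonneg_pos simp: sinh_real_nonneg_iff)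

lemma xexp_le: "0 \<le> x \<Longrightarrow> x * exp (- x) \<le> (1::real)"
proof -
  assume "0 \<le> x"
  have "x \<le> exp x" using exp_ge_add_one_self[of x] by linarith
  then show ?thesis by (simp add: exp_minus field_simps)
qed


lemma mvt_bound:
  fixes f f' :: "real \<Rightarrow> real"
  assumes d: "\<And>s. (f has_real_derivative f' s) (at s)"
    and b: "\<And>s. 0 \<le> s \<Longrightarrow> \<bar>f' s\<bar> \<le> B"
    and t: "0 \<le> t" and h: "0 \<le> h"
  shows "\<bar>f (t + h) - f t\<bar> \<le> h * B"
proof (cases "h = 0")
  case True then show ?thesis by simp
next
  case False
  then have "t < t + h" using h by simp
  from MVT2[OF this, of f f'] d obtain z where z: "t < z" "z < t + h" "f (t + h) - f t = (t + h - t) * f' z"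
    by blast
  have "\<bar>f (t + h) - f t\<bar> = h * \<bar>f' z\<bar>" using z(3) h by (simp add: abs_mult)
  also have "\<dots> \<le> h * B" using b[of z] z(1) t h by (simp add: mult_left_mono)
  finally show ?thesis .
qed

context
  fixes c D k :: real
  assumes c: "0 < c" and D: "0 < D" and k: "0 < k"
begin

definition "\<alpha> = c\<^sup>2 / (2 * D)"

lemma alpha_pos: "0 < \<alpha>" unfolding \<alpha>_def using c D by simp

lemma alpha_sq: "c ^ 4 / (4 * D\<^sup>2) = \<alpha>\<^sup>2"
  unfolding \<alpha>_def by (simp add: power2_eq_square field_simps power4_eq_xxxx)

lemma lstar_iff: "real l \<le> lstar c D k \<longleftrightarrow> (D * k * (2 * real l + 1))\<^sup>2 \<le> D\<^sup>2 * k\<^sup>2 + c\<^sup>2"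
proof -
  have pos: "0 < D * k" using D k by simp
  have "real l \<le> lstar c D k \<longleftrightarrow> D * k * (2 * real l + 1) \<le> sqrt (D\<^sup>2 * k\<^sup>2 + c\<^sup>2)"
    unfolding lstar_def using pos by (simp add: field_simps)
  also have "\<dots> \<longleftrightarrow> (D * k * (2 * real l + 1))\<^sup>2 \<le> D\<^sup>2 * k\<^sup>2 + c\<^sup>2"
  proof -
    have "D * k * (2 * real l + 1) = sqrt ((D * k * (2 * real l + 1))\<^sup>2)"
      using pos by (simp add: real_sqrt_abs)
    then show ?thesis by (metis real_sqrt_le_iff)
  qed
  finally show ?thesis .
qed

lemma key_iff: "(D * k * (2 * real l + 1))\<^sup>2 \<le> D\<^sup>2 * k\<^sup>2 + c\<^sup>2 \<longleftrightarrow> c\<^sup>2 * real l * (real l + 1) * k\<^sup>2 \<le> \<alpha>\<^sup>2"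
proof -
  have "(D * k * (2 * real l + 1))\<^sup>2 \<le> D\<^sup>2 * k\<^sup>2 + c\<^sup>2 \<longleftrightarrow> 4 * D\<^sup>2 * k\<^sup>2 * (real l * (real l + 1)) \<le> c\<^sup>2"
    by (simp add: power2_eq_square algebra_simps)
  also have "\<dots> \<longleftrightarrow> (c\<^sup>2 / (4 * D\<^sup>2)) * (4 * D\<^sup>2 * k\<^sup>2 * (real l * (real l + 1))) \<le> (c\<^sup>2 / (4 * D\<^sup>2)) * c\<^sup>2"
    using c D by (intro mult_le_cancel_left_pos[symmetric]) simp
  also have "\<dots> \<longleftrightarrow> c\<^sup>2 * real l * (real l + 1) * k\<^sup>2 \<le> \<alpha>\<^sup>2"
  proof -
    have e1: "(c\<^sup>2 / (4 * D\<^sup>2)) * (4 * D\<^sup>2 * k\<^sup>2 * (real l * (real l + 1))) = c\<^sup>2 * real l * (real l + 1) * k\<^sup>2"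
      using D by (simp add: field_simps)
    have e2: "(c\<^sup>2 / (4 * D\<^sup>2)) * c\<^sup>2 = \<alpha>\<^sup>2"
      using alpha_sq by (simp add: power4_eq_xxxx power2_eq_square)
    show ?thesis unfolding e1 e2 ..
  qed
  finally show ?thesis .
qed

lemma small_l: "real l \<le> lstar c D k \<Longrightarrow> c\<^sup>2 * real l * (real l + 1) * k\<^sup>2 \<le> \<alpha>\<^sup>2"
  using lstar_iff key_iff by simp

lemma large_l: "\<not> real l \<le> lstar c D k \<Longrightarrow> \<alpha>\<^sup>2 < c\<^sup>2 * real l * (real l + 1) * k\<^sup>2"
  using lstar_iff key_iff by (simp add: not_le)

definition gg :: "nat \<Rightarrow> real \<Rightarrow> real" where
  "gg l t = exp (- (c\<^sup>2 * t) / (2 * D)) * (Al c D k l t + Bl c D k l t)"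

lemma exp_alpha: "exp (- (c\<^sup>2 * t) / (2 * D)) = exp (- (\<alpha> * t))"
  unfolding \<alpha>_def by simp

lemma Kl_props:
  assumes "real l \<le> lstar c D k"
  shows "0 \<le> Kl c D k l" "Kl c D k l \<le> \<alpha>" "(Kl c D k l)\<^sup>2 = \<alpha>\<^sup>2 - c\<^sup>2 * real l * (real l + 1) * k\<^sup>2"
proof -
  have s: "c\<^sup>2 * real l * (real l + 1) * k\<^sup>2 \<le> \<alpha>\<^sup>2" by (rule small_l[OF assms])
  have nn: "0 \<le> c\<^sup>2 * real l * (real l + 1) * k\<^sup>2" by simp
  have K: "Kl c D k l = sqrt (\<alpha>\<^sup>2 - c\<^sup>2 * real l * (real l + 1) * k\<^sup>2)"
    unfolding Kl_def alpha_sq ..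
  show "0 \<le> Kl c D k l" unfolding K using s by simp
  show "(Kl c D k l)\<^sup>2 = \<alpha>\<^sup>2 - c\<^sup>2 * real l * (real l + 1) * k\<^sup>2" unfolding K using s by simp
  have "Kl c D k l \<le> sqrt (\<alpha>\<^sup>2)" unfolding K using nn by (simp only: real_sqrt_le_iff)
  then show "Kl c D k l \<le> \<alpha>" using alpha_pos by simp
qed

lemma Kl'_props:
  assumes "\<not> real l \<le> lstar c D k"
  shows "0 < Kl' c D k l" "Kl' c D k l \<le> c * k * (real l + 1)"
proof -
  have s: "\<alpha>\<^sup>2 < c\<^sup>2 * real l * (real l + 1) * k\<^sup>2" by (rule large_l[OF assms])
  have K: "Kl' c D k l = sqrt (c\<^sup>2 * real l * (real l + 1) * k\<^sup>2 - \<alpha>\<^sup>2)"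
    unfolding Kl'_def alpha_sq ..
  show "0 < Kl' c D k l" unfolding K using s by simp
  have "c\<^sup>2 * real l * (real l + 1) * k\<^sup>2 - \<alpha>\<^sup>2 \<le> (c * k * (real l + 1))\<^sup>2"
    using c k by (simp add: power2_eq_square algebra_simps mult_left_mono)
  then have "Kl' c D k l \<le> sqrt ((c * k * (real l + 1))\<^sup>2)" unfolding K by (simp only: real_sqrt_le_iff)
  then show "Kl' c D k l \<le> c * k * (real l + 1)" using c k by simp
qed

lemma sinhK: "sinh (s * K) * K = K\<^sup>2 * shc s K"
  unfolding shc_def by (simp add: power2_eq_square)

lemma gg_deriv_bound:
  "\<exists>g'. (\<forall>s. (gg l has_real_derivative g' s) (at s)) \<and>
        (\<forall>s\<ge>0. \<bar>g' s\<bar> \<le> (2 * \<alpha> + c * k) * (real l + 1))"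
proof (cases "real l \<le> lstar c D k")
  case True
  define K where "K = Kl c D k l"
  have KP: "0 \<le> K" "K \<le> \<alpha>" using Kl_props[OF True] unfolding K_def by auto
  have gg: "gg l = (\<lambda>t. exp (- (\<alpha> * t)) * (cosh (t * K) + \<alpha> * shc t K))"
    unfolding gg_def[abs_def] Al_def Bl_def K_def exp_alpha using True by (simp add: \<alpha>_def)
  define g' where "g' s = exp (- (\<alpha> * s)) * (K\<^sup>2 - \<alpha>\<^sup>2) * shc s K" for s
  have d: "(gg l has_real_derivative g' s) (at s)" for s
    unfolding gg g'_def
    apply (rule derivative_eq_intros shc_deriv refl | simp)+
    using sinhK[of s] by (simp add: algebra_simps power2_eq_square)
  have b: "\<bar>g' s\<bar> \<le> (2 * \<alpha> + c * k) * (real l + 1)" if s: "0 \<le> s" for s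
  proof -
    have sh: "0 \<le> shc s K" "shc s K \<le> s * exp (s * K)" using shc_nonneg[OF s KP(1)] shc_bound[OF s KP(1)] by auto
    have kk: "K\<^sup>2 \<le> \<alpha>\<^sup>2" using KP by (intro power_mono) auto
    have "\<bar>g' s\<bar> = exp (- (\<alpha> * s)) * \<bar>K\<^sup>2 - \<alpha>\<^sup>2\<bar> * shc s K"
      unfolding g'_def using sh by (simp add: abs_mult)
    also have "\<bar>K\<^sup>2 - \<alpha>\<^sup>2\<bar> = (\<alpha> - K) * (\<alpha> + K)" using kk by (simp add: power2_eq_square algebra_simps)
    finally have "\<bar>g' s\<bar> = exp (- (\<alpha> * s)) * ((\<alpha> - K) * (\<alpha> + K)) * shc s K" .
    also have "\<dots> \<le> exp (- (\<alpha> * s)) * ((\<alpha> - K) * (\<alpha> + K)) * (s * exp (s * K))"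
      using sh KP by (intro mult_left_mono) auto
    also have "\<dots> = (\<alpha> + K) * (((\<alpha> - K) * s) * exp (- ((\<alpha> - K) * s)))"
      by (simp add: algebra_simps flip: exp_add)
    also have "\<dots> \<le> (\<alpha> + K) * 1"
      using KP s by (intro mult_left_mono xexp_le) auto
    also have "\<dots> \<le> (2 * \<alpha> + c * k) * (real l + 1)"
    proof -
      have "0 < c * k" using c k by simp
      then have "(\<alpha> + K) * 1 \<le> (2 * \<alpha> + c * k) * 1" using KP by simp
      also have "\<dots> \<le> (2 * \<alpha> + c * k) * (real l + 1)"
        using alpha_pos c k by (intro mult_left_mono) auto
      finally show ?thesis .
    qed
    finally show ?thesis .
  qed
  show ?thesis using d b by blast
next
  case False
  define K where "K = Kl' c D k l"
  have KP: "0 < K" "K \<le> c * k * (real l + 1)" using Kl'_props[OF False] unfolding K_def by auto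
  have gg: "gg l = (\<lambda>t. exp (- (\<alpha> * t)) * (cos (t * K) + \<alpha> / K * sin (t * K)))"
    unfolding gg_def[abs_def] Al_def Bl_def K_def exp_alpha using False by (simp add: \<alpha>_def)
  define g' where "g' s = - exp (- (\<alpha> * s)) * (\<alpha>\<^sup>2 + K\<^sup>2) * (sin (s * K) / K)" for s
  have d: "(gg l has_real_derivative g' s) (at s)" for s
    unfolding gg g'_def
    by (rule derivative_eq_intros refl | simp)+ (use KP in \<open>simp add: field_simps power2_eq_square\<close>)
  have b: "\<bar>g' s\<bar> \<le> (2 * \<alpha> + c * k) * (real l + 1)" if s: "0 \<le> s" for s
  proof -
    have s1: "\<bar>sin (s * K) / K\<bar> \<le> s" using abs_sin_x_le_abs_x[of "s*K"] KP s
      by (simp add: abs_mult divide_simps)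
    have s2: "\<bar>sin (s * K)\<bar> \<le> 1" by simp
    have "\<bar>g' s\<bar> = exp (- (\<alpha> * s)) * \<alpha>\<^sup>2 * \<bar>sin (s * K) / K\<bar> + exp (- (\<alpha> * s)) * K * \<bar>sin (s * K)\<bar>"
    proof -
      have "\<bar>g' s\<bar> = exp (- (\<alpha> * s)) * (\<alpha>\<^sup>2 + K\<^sup>2) * \<bar>sin (s * K) / K\<bar>"
        unfolding g'_def by (simp add: abs_mult add_pos_nonneg)
      also have "\<dots> = exp (- (\<alpha> * s)) * \<alpha>\<^sup>2 * \<bar>sin (s * K) / K\<bar> + exp (- (\<alpha> * s)) * (K\<^sup>2 * \<bar>sin (s * K)\<bar> / K)"
        using KP by (simp add: abs_divide algebra_simps)
      also have "K\<^sup>2 * \<bar>sin (s * K)\<bar> / K = K * \<bar>sin (s * K)\<bar>" using KP by (simp add: power2_eq_square)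
      finally show ?thesis by (simp add: algebra_simps)
    qed
    also have "\<dots> \<le> exp (- (\<alpha> * s)) * \<alpha>\<^sup>2 * s + exp (- (\<alpha> * s)) * K * 1"
      using s1 s2 KP by (intro add_mono mult_left_mono) auto
    also have "\<dots> = \<alpha> * ((\<alpha> * s) * exp (- (\<alpha> * s))) + exp (- (\<alpha> * s)) * K"
      by (simp add: power2_eq_square algebra_simps)
    also have "\<dots> \<le> \<alpha> * 1 + 1 * K"
      using alpha_pos s KP by (intro add_mono mult_left_mono xexp_le mult_right_mono) auto
    also have "\<dots> \<le> (2 * \<alpha> + c * k) * (real l + 1)"
    proof -
      have "0 \<le> real l * (2 * \<alpha>)" using alpha_pos by simp
      then show ?thesis using KP alpha_pos by (simp add: algebra_simps; linarith)
    qed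
    finally show ?thesis .
  qed
  show ?thesis using d b by blast
qed

lemma gg_lip:
  assumes "0 \<le> t" "0 \<le> h"
  shows "\<bar>gg l (t + h) - gg l t\<bar> \<le> h * ((2 * \<alpha> + c * k) * (real l + 1))"
proof -
  obtain g' where "\<forall>s. (gg l has_real_derivative g' s) (at s)"
      "\<forall>s\<ge>0. \<bar>g' s\<bar> \<le> (2 * \<alpha> + c * k) * (real l + 1)"
    using gg_deriv_bound by blast
  then show ?thesis using mvt_bound[of "gg l" g' _ t h] assms by blast
qed

lemma AB_bound:
  assumes "\<not> real l \<le> lstar c D k" "0 \<le> t"
  shows "\<bar>Al c D k l t + Bl c D k l t\<bar> \<le> 1 + \<alpha> * t"
proof -
  define K where "K = Kl' c D k l"
  have KP: "0 < K" using Kl'_props[OF assms(1)] unfolding K_def by auto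
  have e: "Al c D k l t + Bl c D k l t = cos (t * K) + \<alpha> * (sin (t * K) / K)"
    unfolding Al_def Bl_def K_def using assms(1) by (simp add: \<alpha>_def)
  have s1: "\<bar>sin (t * K) / K\<bar> \<le> t" using abs_sin_x_le_abs_x[of "t*K"] KP assms(2)
    by (simp add: abs_mult divide_simps)
  have "\<bar>cos (t * K) + \<alpha> * (sin (t * K) / K)\<bar> \<le> \<bar>cos (t * K)\<bar> + \<alpha> * \<bar>sin (t * K) / K\<bar>"
    using alpha_pos by (simp add: abs_mult abs_triangle_ineq[THEN order_trans])
  also have "\<dots> \<le> 1 + \<alpha> * t" using s1 alpha_pos by (intro add_mono mult_left_mono) auto
  finally show ?thesis unfolding e .
qed

end


context
  fixes M :: "'a measure" and C :: "nat \<Rightarrow> real" and a :: "nat \<Rightarrow> int \<Rightarrow> 'a \<Rightarrow> complex"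
  assumes G: "gaussian_isotropic_coeffs M C a"
begin

lemma PS: "prob_space M" using G unfolding gaussian_isotropic_coeffs_def by blast

interpretation prob_space M by (rule PS)

lemma C_nonneg: "0 \<le> C l" using G unfolding gaussian_isotropic_coeffs_def by blast

lemma a_meas[measurable]: "a l m \<in> borel_measurable M"
  using G unfolding gaussian_isotropic_coeffs_def by blast

lemma a_sym: "\<bar>m\<bar> \<le> int l \<Longrightarrow> \<omega> \<in> space M \<Longrightarrow> a l (- m) \<omega> = (-1) ^ nat \<bar>m\<bar> * cnj (a l m \<omega>)"
  using G unfolding gaussian_isotropic_coeffs_def by blast

definition VV :: "nat \<times> int \<times> bool \<Rightarrow> 'a \<Rightarrow> real" where
  "VV = (\<lambda>(l, m, b) \<omega>. if b then Re (a l m \<omega>) else Im (a l m \<omega>))"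

definition JJs :: "(nat \<times> int \<times> bool) set" where
  "JJs = {(l, m, b). 0 \<le> m \<and> m \<le> int l \<and> (m = 0 \<longrightarrow> b)}"

lemma indep: "indep_vars (\<lambda>_. borel) VV JJs"
  using G unfolding gaussian_isotropic_coeffs_def VV_def JJs_def by blast

lemma VV_meas[measurable]: "VV i \<in> borel_measurable M"
  unfolding VV_def by (cases i) auto

lemma C0: "C l = 0 \<Longrightarrow> AE \<omega> in M. a l m \<omega> = 0"
  using G unfolding gaussian_isotropic_coeffs_def by blast

lemma dist0: "0 < C l \<Longrightarrow> distributed M lborel (\<lambda>\<omega>. Re (a l 0 \<omega>)) (normal_density 0 (sqrt (C l)))"
  using G unfolding gaussian_isotropic_coeffs_def by blast

lemma distm: "0 < C l \<Longrightarrow> 1 \<le> m \<Longrightarrow> m \<le> int l \<Longrightarrow>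
   distributed M lborel (\<lambda>\<omega>. Re (a l m \<omega>)) (normal_density 0 (sqrt (C l / 2))) \<and>
   distributed M lborel (\<lambda>\<omega>. Im (a l m \<omega>)) (normal_density 0 (sqrt (C l / 2)))"
  using G unfolding gaussian_isotropic_coeffs_def by blast

lemma normal_moments:
  assumes s: "0 < s" and d: "distributed M lborel X (normal_density 0 s)"
  shows "integrable M X" "integrable M (\<lambda>\<omega>. (X \<omega>)\<^sup>2)" "expectation X = 0" "expectation (\<lambda>\<omega>. (X \<omega>)\<^sup>2) = s\<^sup>2"
proof -
  show e: "expectation X = 0" using normal_distributed_expectation[OF s d] .
  have "integrable lborel (\<lambda>x. normal_density 0 s x * x)"
    using integrable_normal_moment[OF s, of 0 1] by simp
  then show "integrable M X"
    using distributed_integrable[OF d, of "\<lambda>x. x"] by simp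
  have "integrable lborel (\<lambda>x. normal_density 0 s x * x\<^sup>2)"
    using integrable_normal_moment[OF s, of 0 2] by simp
  then show "integrable M (\<lambda>\<omega>. (X \<omega>)\<^sup>2)"
    using distributed_integrable[OF d, of "\<lambda>x. x\<^sup>2"] by simp
  show "expectation (\<lambda>\<omega>. (X \<omega>)\<^sup>2) = s\<^sup>2"
    using normal_distributed_variance[OF s d] e by simp
qed

definition J0 :: "(nat \<times> int \<times> bool) set" where
  "J0 = {(l, m, b). 0 \<le> m \<and> m \<le> int l}"

definition var' :: "nat \<times> int \<times> bool \<Rightarrow> real" where
  "var' = (\<lambda>(l, m, b). if m = 0 then (if b then C l else 0) else C l / 2)"

lemma Im_a0: "\<omega> \<in> space M \<Longrightarrow> Im (a l 0 \<omega>) = 0"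
proof -
  assume w: "\<omega> \<in> space M"
  have "a l 0 \<omega> = cnj (a l 0 \<omega>)" using a_sym[of 0 l \<omega>] w by simp
  then show ?thesis by (metis cnj.simps(2) neg_equal_zero)
qed

lemma VV_mom:
  assumes i: "i \<in> J0"
  shows "integrable M (VV i) \<and> integrable M (\<lambda>\<omega>. (VV i \<omega>)\<^sup>2) \<and> expectation (VV i) = 0
         \<and> expectation (\<lambda>\<omega>. (VV i \<omega>)\<^sup>2) = var' i"
proof -
  obtain l m b where lmb: "i = (l, m, b)" by (cases i) auto
  have m: "0 \<le> m" "m \<le> int l" using i lmb unfolding J0_def by auto
  show ?thesis
  proof (cases "m = 0 \<and> \<not> b")
    case True
    then have z: "\<And>\<omega>. \<omega> \<in> space M \<Longrightarrow> VV i \<omega> = 0" unfolding lmb VV_def using Im_a0 by auto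
    have e1: "integrable M (VV i) = integrable M (\<lambda>_. 0::real)" by (rule Bochner_Integration.integrable_cong[OF refl]) (simp add: z)
    have e2: "integrable M (\<lambda>\<omega>. (VV i \<omega>)\<^sup>2) = integrable M (\<lambda>_. 0::real)" by (rule Bochner_Integration.integrable_cong[OF refl]) (simp add: z)
    have e3: "expectation (VV i) = expectation (\<lambda>_. 0::real)" by (rule Bochner_Integration.integral_cong[OF refl]) (simp add: z)
    have e4: "expectation (\<lambda>\<omega>. (VV i \<omega>)\<^sup>2) = expectation (\<lambda>_. 0::real)" by (rule Bochner_Integration.integral_cong[OF refl]) (simp add: z)
    show ?thesis using e1 e2 e3 e4 True unfolding lmb var'_def by simp
  next
    case False
    show ?thesis
    proof (cases "C l = 0")
      case True
      have z: "AE \<omega> in M. VV i \<omega> = 0" using C0[OF True, of m] unfolding lmb VV_def by auto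
      have e1: "integrable M (VV i) = integrable M (\<lambda>_. 0::real)" by (rule integrable_cong_AE) (use z in auto)
      have e2: "integrable M (\<lambda>\<omega>. (VV i \<omega>)\<^sup>2) = integrable M (\<lambda>_. 0::real)" by (rule integrable_cong_AE) (use z in auto)
      have e3: "expectation (VV i) = expectation (\<lambda>_. 0::real)" by (rule integral_cong_AE) (use z in auto)
      have e4: "expectation (\<lambda>\<omega>. (VV i \<omega>)\<^sup>2) = expectation (\<lambda>_. 0::real)" by (rule integral_cong_AE) (use z in auto)
      show ?thesis using e1 e2 e3 e4 True unfolding lmb var'_def by simp
    next
      case Cne: False
      then have Cp: "0 < C l" using C_nonneg[of l] by simp
      show ?thesis
      proof (cases "m = 0")
        case True
        then have b: b using False by simp
        have d: "distributed M lborel (VV i) (normal_density 0 (sqrt (C l)))"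
          using dist0[OF Cp] unfolding lmb VV_def True using b by simp
        have s: "0 < sqrt (C l)" using Cp by simp
        show ?thesis using normal_moments[OF s d] Cp True b unfolding lmb var'_def by simp
      next
        case m0: False
        then have m1: "1 \<le> m" using m by simp
        have d: "distributed M lborel (VV i) (normal_density 0 (sqrt (C l / 2)))"
          using distm[OF Cp m1 m(2)] unfolding lmb VV_def by (cases b) simp_all
        have s: "0 < sqrt (C l / 2)" using Cp by simp
        show ?thesis using normal_moments[OF s d] Cp m0 unfolding lmb var'_def by simp
      qed
    qed
  qed
qed

lemma VV_cross:
  assumes i: "i \<in> J0" and j: "j \<in> J0" and ij: "i \<noteq> j"
  shows "integrable M (\<lambda>\<omega>. VV i \<omega> * VV j \<omega>) \<and> expectation (\<lambda>\<omega>. VV i \<omega> * VV j \<omega>) = 0"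
proof (cases "i \<in> JJs \<and> j \<in> JJs")
  case True
  have ind: "indep_vars (\<lambda>_. borel) VV {i, j}"
    using indep_vars_subset[OF indep] True by auto
  have int: "\<And>k. k \<in> {i, j} \<Longrightarrow> integrable M (VV k)" using VV_mom i j by auto
  have p: "\<And>\<omega>. (\<Prod>k\<in>{i, j}. VV k \<omega>) = VV i \<omega> * VV j \<omega>" using ij by simp
  have "integrable M (\<lambda>\<omega>. \<Prod>k\<in>{i, j}. VV k \<omega>)"
    by (rule indep_vars_integrable[OF _ ind int]) simp
  moreover have "expectation (\<lambda>\<omega>. \<Prod>k\<in>{i, j}. VV k \<omega>) = (\<Prod>k\<in>{i, j}. expectation (VV k))"
    by (rule indep_vars_lebesgue_integral[OF _ ind int]) simp
  ultimately show ?thesis unfolding p using VV_mom[OF i] VV_mom[OF j] ij by simp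
next
  case False
  then have "(\<exists>l. i = (l, 0, False)) \<or> (\<exists>l. j = (l, 0, False))"
    using i j unfolding J0_def JJs_def by auto
  then have z: "\<And>\<omega>. \<omega> \<in> space M \<Longrightarrow> VV i \<omega> * VV j \<omega> = 0"
    unfolding VV_def using Im_a0 by auto
  have e1: "integrable M (\<lambda>\<omega>. VV i \<omega> * VV j \<omega>) = integrable M (\<lambda>_. 0::real)" by (rule Bochner_Integration.integrable_cong[OF refl]) (simp add: z)
  have e3: "expectation (\<lambda>\<omega>. VV i \<omega> * VV j \<omega>) = expectation (\<lambda>_. 0::real)" by (rule Bochner_Integration.integral_cong[OF refl]) (simp add: z)
  show ?thesis using e1 e3 by simp
qed

lemma VV_prod:
  assumes i: "i \<in> J0" and j: "j \<in> J0"
  shows "integrable M (\<lambda>\<omega>. VV i \<omega> * VV j \<omega>) \<and> expectation (\<lambda>\<omega>. VV i \<omega> * VV j \<omega>) = (if i = j then var' i else 0)"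
  using VV_cross[OF i j] VV_mom[OF i] by (cases "i = j") (simp_all add: power2_eq_square)

definition sg :: "int \<Rightarrow> real" where "sg m = (if 0 \<le> m then 1 else (-1) ^ nat \<bar>m\<bar>)"
definition tg :: "int \<Rightarrow> real" where "tg m = (if 0 \<le> m then 1 else -1)"

lemma sg_sq: "sg m * sg m = 1" unfolding sg_def by (simp flip: power_add add: power_even_eq[symmetric] mult_2[symmetric])

lemma a_repr:
  assumes m: "\<bar>m\<bar> \<le> int l" and w: "\<omega> \<in> space M"
  shows "a l m \<omega> = complex_of_real (sg m) * (complex_of_real (VV (l, \<bar>m\<bar>, True) \<omega>)
          + \<i> * complex_of_real (tg m) * complex_of_real (VV (l, \<bar>m\<bar>, False) \<omega>))"
proof (cases "0 \<le> m")
  case True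
  then show ?thesis unfolding sg_def tg_def VV_def by (simp add: complex_eq_iff)
next
  case False
  have "a l m \<omega> = a l (- \<bar>m\<bar>) \<omega>" using False by simp
  also have "\<dots> = (-1) ^ nat \<bar>m\<bar> * cnj (a l \<bar>m\<bar> \<omega>)" using a_sym[of "\<bar>m\<bar>" l \<omega>] m w by simp
  finally show ?thesis using False unfolding sg_def tg_def VV_def by (simp add: complex_eq_iff)
qed

lemma in_J0: "\<bar>m\<bar> \<le> int l \<Longrightarrow> (l, \<bar>m\<bar>, b) \<in> J0" unfolding J0_def by auto

lemma cov:
  assumes m: "\<bar>m\<bar> \<le> int l" and m': "\<bar>m'\<bar> \<le> int l'"
  shows "integrable M (\<lambda>\<omega>. a l m \<omega> * cnj (a l' m' \<omega>)) \<and>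
         (\<integral>\<omega>. a l m \<omega> * cnj (a l' m' \<omega>) \<partial>M) = (if l = l' \<and> m = m' then complex_of_real (C l) else 0)"
proof -
  define R where "R = VV (l, \<bar>m\<bar>, True)"
  define I where "I = VV (l, \<bar>m\<bar>, False)"
  define R' where "R' = VV (l', \<bar>m'\<bar>, True)"
  define I' where "I' = VV (l', \<bar>m'\<bar>, False)"
  define X where "X \<omega> = sg m * sg m' * (R \<omega> * R' \<omega> + tg m * tg m' * (I \<omega> * I' \<omega>))" for \<omega>
  define Y where "Y \<omega> = sg m * sg m' * (tg m * (I \<omega> * R' \<omega>) - tg m' * (R \<omega> * I' \<omega>))" for \<omega>
  have eq: "a l m \<omega> * cnj (a l' m' \<omega>) = complex_of_real (X \<omega>) + \<i> * complex_of_real (Y \<omega>)"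
    if w: "\<omega> \<in> space M" for \<omega>
    unfolding a_repr[OF m w] a_repr[OF m' w] X_def Y_def R_def I_def R'_def I'_def
    by (simp add: complex_eq_iff algebra_simps)
  note P1 = VV_prod[OF in_J0[OF m, of True] in_J0[OF m', of True]]
  note P2 = VV_prod[OF in_J0[OF m, of False] in_J0[OF m', of False]]
  note P3 = VV_prod[OF in_J0[OF m, of False] in_J0[OF m', of True]]
  note P4 = VV_prod[OF in_J0[OF m, of True] in_J0[OF m', of False]]
  have iX: "integrable M X" unfolding X_def R_def I_def R'_def I'_def using P1 P2 by simp
  have iY: "integrable M Y" unfolding Y_def R_def I_def R'_def I'_def using P3 P4 by simp
  have EY: "expectation Y = 0" unfolding Y_def R_def I_def R'_def I'_def using P3 P4 by simp
  have EX: "expectation X = sg m * sg m' * ((if l = l' \<and> \<bar>m\<bar> = \<bar>m'\<bar> then var' (l, \<bar>m\<bar>, True) else 0)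
       + tg m * tg m' * (if l = l' \<and> \<bar>m\<bar> = \<bar>m'\<bar> then var' (l, \<bar>m\<bar>, False) else 0))"
    unfolding X_def R_def I_def R'_def I'_def using P1 P2 by simp
  have EX': "expectation X = (if l = l' \<and> m = m' then C l else 0)"
  proof (cases "l = l' \<and> \<bar>m\<bar> = \<bar>m'\<bar>")
    case False
    then show ?thesis unfolding EX by auto
  next
    case True
    show ?thesis
    proof (cases "m = m'")
      case True
      then show ?thesis unfolding EX using \<open>l = l' \<and> \<bar>m\<bar> = \<bar>m'\<bar>\<close> sg_sq[of m']
        by (auto simp: var'_def tg_def)
    next
      case False
      then have "m' = - m" "m \<noteq> 0" using True by auto
      then show ?thesis unfolding EX using True by (auto simp: var'_def tg_def)
    qed
  qed
  have ieq: "integrable M (\<lambda>\<omega>. a l m \<omega> * cnj (a l' m' \<omega>)) =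
       integrable M (\<lambda>\<omega>. complex_of_real (X \<omega>) + \<i> * complex_of_real (Y \<omega>))"
    by (rule Bochner_Integration.integrable_cong[OF refl]) (simp add: eq)
  have Ieq: "(\<integral>\<omega>. a l m \<omega> * cnj (a l' m' \<omega>) \<partial>M) =
       (\<integral>\<omega>. complex_of_real (X \<omega>) + \<i> * complex_of_real (Y \<omega>) \<partial>M)"
    by (rule Bochner_Integration.integral_cong[OF refl]) (simp add: eq)
  have iX': "integrable M (\<lambda>\<omega>. complex_of_real (X \<omega>))" using iX by (rule integrable_of_real)
  have iY': "integrable M (\<lambda>\<omega>. \<i> * complex_of_real (Y \<omega>))"
    using integrable_of_real[OF iY] by (rule integrable_mult_right)
  show ?thesis
    unfolding ieq Ieq using iX' iY'
    by (simp add: integral_complex_of_real EY EX')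
qed

lemma var_sum:
  assumes I: "finite I" and Im: "\<And>l m. (l, m) \<in> I \<Longrightarrow> \<bar>m\<bar> \<le> int l"
  shows "integrable M (\<lambda>\<omega>. (cmod (\<Sum>(l, m)\<in>I. e l m * a l m \<omega>))\<^sup>2) \<and>
         expectation (\<lambda>\<omega>. (cmod (\<Sum>(l, m)\<in>I. e l m * a l m \<omega>))\<^sup>2) = (\<Sum>(l, m)\<in>I. (cmod (e l m))\<^sup>2 * C l)"
proof -
  define S where "S \<omega> = (\<Sum>(l, m)\<in>I. e l m * a l m \<omega>)" for \<omega>
  define T where "T \<omega> = (\<Sum>i\<in>I. \<Sum>j\<in>I. (e (fst i) (snd i) * cnj (e (fst j) (snd j))) *
                   (a (fst i) (snd i) \<omega> * cnj (a (fst j) (snd j) \<omega>)))" for \<omega>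
  have ST: "S \<omega> * cnj (S \<omega>) = T \<omega>" for \<omega>
    unfolding S_def T_def
    by (simp add: case_prod_beta sum_distrib_left sum_distrib_right algebra_simps) (rule sum.swap)
  have iT: "integrable M T" unfolding T_def
    using cov Im by (auto intro!: integrable_sum integrable_mult_right simp: case_prod_beta)
  have ET: "(\<integral>\<omega>. T \<omega> \<partial>M) = (\<Sum>i\<in>I. complex_of_real ((cmod (e (fst i) (snd i)))\<^sup>2 * C (fst i)))"
  proof -
    have "(\<integral>\<omega>. T \<omega> \<partial>M) = (\<Sum>i\<in>I. \<Sum>j\<in>I. (e (fst i) (snd i) * cnj (e (fst j) (snd j))) *
            (\<integral>\<omega>. a (fst i) (snd i) \<omega> * cnj (a (fst j) (snd j) \<omega>) \<partial>M))"
    proof -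
      have intij: "integrable M (\<lambda>\<omega>. a (fst i) (snd i) \<omega> * cnj (a (fst j) (snd j) \<omega>))"
        if "i \<in> I" "j \<in> I" for i j
        using cov[of "snd i" "fst i" "snd j" "fst j"] Im[of "fst i" "snd i"] Im[of "fst j" "snd j"] that by auto
      show ?thesis unfolding T_def
        apply (subst Bochner_Integration.integral_sum)
         apply (rule Bochner_Integration.integrable_sum)
         apply (rule integrable_mult_right)
         apply (rule intij; assumption)
        apply (rule sum.cong[OF refl])
        apply (subst Bochner_Integration.integral_sum)
         apply (rule integrable_mult_right)
         apply (rule intij; assumption)
        apply (rule sum.cong[OF refl])
        apply (rule integral_mult_right_zero)
        done
    qed
    also have "\<dots> = (\<Sum>i\<in>I. \<Sum>j\<in>I. if j = i then (e (fst i) (snd i) * cnj (e (fst i) (snd i))) * complex_of_real (C (fst i)) else 0)"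
    proof (intro sum.cong refl)
      fix i j assume i: "i \<in> I" and j: "j \<in> I"
      have "\<bar>snd i\<bar> \<le> int (fst i)" "\<bar>snd j\<bar> \<le> int (fst j)" using Im[of "fst i" "snd i"] Im[of "fst j" "snd j"] i j by auto
      from cov[OF this] show "(e (fst i) (snd i) * cnj (e (fst j) (snd j))) *
            (\<integral>\<omega>. a (fst i) (snd i) \<omega> * cnj (a (fst j) (snd j) \<omega>) \<partial>M) =
            (if j = i then (e (fst i) (snd i) * cnj (e (fst i) (snd i))) * complex_of_real (C (fst i)) else 0)"
        by (auto simp: prod_eq_iff)
    qed
    also have "\<dots> = (\<Sum>i\<in>I. complex_of_real ((cmod (e (fst i) (snd i)))\<^sup>2 * C (fst i)))"
      using I by (simp add: complex_norm_square[symmetric])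
    finally show ?thesis .
  qed
  have n: "(cmod (S \<omega>))\<^sup>2 = Re (T \<omega>)" for \<omega>
    using arg_cong[OF complex_norm_square[of "S \<omega>"], of Re] ST by simp
  have "integrable M (\<lambda>\<omega>. Re (T \<omega>))" by (rule integrable_Re[OF iT])
  moreover have "expectation (\<lambda>\<omega>. Re (T \<omega>)) = (\<Sum>i\<in>I. (cmod (e (fst i) (snd i)))\<^sup>2 * C (fst i))"
    unfolding integral_Re[OF iT] ET by simp
  ultimately show ?thesis unfolding S_def[symmetric] n by (simp add: case_prod_beta)
qed

end


definition kap :: "nat \<Rightarrow> nat \<Rightarrow> real" where
  "kap l n = (2 * real l + 1) * fact (l - n) / (4 * pi * fact (l + n))"

definition Pq :: "nat \<Rightarrow> nat \<Rightarrow> real poly" where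
  "Pq l n = Y2 ^ n * (Dn n (legendre_poly l))\<^sup>2"

lemma assoc_sq:
  assumes "\<bar>m\<bar> \<le> int l" "\<bar>x\<bar> \<le> 1"
  shows "(sh_const l m)\<^sup>2 * (assoc_legendre l m x)\<^sup>2 = kap l (nat \<bar>m\<bar>) * poly (Pq l (nat \<bar>m\<bar>)) x"
proof -
  define n where "n = nat \<bar>m\<bar>"
  have x2: "0 \<le> 1 - x\<^sup>2" using assms(2) abs_square_le_1[of x] by simp
  have p: "(sqrt (1 - x\<^sup>2) ^ n * poly ((pderiv ^^ n) (legendre_poly l)) x)\<^sup>2 = poly (Pq l n) x"
  proof -
    have "sqrt (1 - x\<^sup>2) ^ (n * 2) = (1 - x\<^sup>2) ^ n"
    proof -
      have "(sqrt (1 - x\<^sup>2))\<^sup>2 = 1 - x\<^sup>2" using x2 by simp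
      then show ?thesis by (simp add: mult.commute[of n 2] power_mult)
    qed
    then show ?thesis unfolding Pq_def Dn_def using x2
      by (simp add: power_mult_distrib flip: power_mult)
  qed
  have nl: "n \<le> l" using assms(1) unfolding n_def by simp
  have fpos: "(fact (l - n) :: real) > 0" "(fact (l + n) :: real) > 0" by simp_all
  show ?thesis
  proof (cases "0 \<le> m")
    case True
    have e1: "nat (int l - m) = l - n" "nat (int l + m) = l + n" using True nl unfolding n_def by auto
    have "(sh_const l m)\<^sup>2 = kap l n"
      unfolding sh_const_def kap_def e1 using fpos
      by (simp add: power_mult_distrib real_sqrt_pow2 flip: power_mult)
    then show ?thesis using True p unfolding assoc_legendre_def n_def[symmetric] Let_def
      by (simp add: power_mult_distrib)
  next
    case False
    have e1: "nat (int l - m) = l + n" "nat (int l + m) = l - n" using False nl unfolding n_def by auto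
    have "(sh_const l m)\<^sup>2 = (2 * real l + 1) * fact (l + n) / (4 * pi * fact (l - n))"
      unfolding sh_const_def e1 using fpos
      by (simp add: power_mult_distrib real_sqrt_pow2 flip: power_mult)
    moreover have "(assoc_legendre l m x)\<^sup>2 = (fact (l - n) / fact (l + n))\<^sup>2 * poly (Pq l n) x"
    proof -
      define q where "q = sqrt (1 - x\<^sup>2) ^ n * poly ((pderiv ^^ n) (legendre_poly l)) x"
      have "(assoc_legendre l m x)\<^sup>2 = ((-1) ^ n * fact (l - n) / fact (l + n) * q)\<^sup>2"
        using False unfolding assoc_legendre_def n_def[symmetric] Let_def q_def by simp
      also have "\<dots> = ((-1) ^ n)\<^sup>2 * (fact (l - n) / fact (l + n))\<^sup>2 * q\<^sup>2"
        by (simp add: power_mult_distrib power_divide)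
      also have "((-1::real) ^ n)\<^sup>2 = 1" by (simp flip: power_mult add: mult.commute[of n 2] power_mult)
      finally show ?thesis using p unfolding q_def by simp
    qed
    moreover have "(2 * real l + 1) * fact (l + n) / (4 * pi * fact (l - n)) * ((fact (l - n) / fact (l + n))\<^sup>2 * poly (Pq l n) x)
        = kap l n * poly (Pq l n) x"
    proof -
      have aux: "A \<noteq> 0 \<Longrightarrow> B \<noteq> 0 \<Longrightarrow> (2 * real l + 1) * B / (4 * pi * A) * ((A / B)\<^sup>2 * P) = (2 * real l + 1) * A / (4 * pi * B) * P" for A B P :: real
        by (simp add: field_simps power2_eq_square)
      show ?thesis unfolding kap_def using aux fpos by simp
    qed
    ultimately show ?thesis unfolding n_def[symmetric] by simp
  qed
qed

lemma sph_sq: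
  assumes "\<bar>m\<bar> \<le> int l"
  shows "(cmod (sph_harm l m \<theta> \<phi>))\<^sup>2 = kap l (nat \<bar>m\<bar>) * poly (Pq l (nat \<bar>m\<bar>)) (cos \<theta>)"
proof -
  have "(cmod (sph_harm l m \<theta> \<phi>))\<^sup>2 = (sh_const l m)\<^sup>2 * (assoc_legendre l m (cos \<theta>))\<^sup>2"
    unfolding sph_harm_def by (simp add: norm_mult power_mult_distrib)
  then show ?thesis using assoc_sq[OF assms, of "cos \<theta>"] by simp
qed

lemma PInt_Pq: "n \<le> l \<Longrightarrow> 2 * pi * kap l n * PInt (Pq l n) = 1"
proof -
  assume "n \<le> l"
  moreover have "(fact (l - n) :: real) > 0" "(fact (l + n) :: real) > 0" by simp_all
  ultimately have A: "(fact (l - n) :: real) > 0" "(fact (l + n) :: real) > 0"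
    and P: "PInt (Pq l n) = 2 * fact (l + n) / ((2 * real l + 1) * fact (l - n))"
    using legendre_norm[of n l] unfolding Pq_def by auto
  have nz: "(2 * real l + 1) * fact (l - n) \<noteq> 0" "4 * pi * fact (l + n) \<noteq> 0" using A by auto
  have aux: "u \<noteq> 0 \<Longrightarrow> v \<noteq> 0 \<Longrightarrow> 2 * pi * (u / (4 * pi * v)) * (2 * v / u) = 1" for u v :: real
    by (simp add: field_simps)
  have "(2 * real l + 1) * fact (l - n) \<noteq> 0" "(fact (l + n)::real) \<noteq> 0" using A by auto
  note q = aux[OF this]
  have "2 * pi * kap l n * PInt (Pq l n) = 2 * pi * ((2 * real l + 1) * fact (l - n) / (4 * pi * fact (l + n))) * (2 * fact (l + n) / ((2 * real l + 1) * fact (l - n)))"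
    unfolding P kap_def ..
  then show ?thesis using q by simp
qed


lemma pderiv_sum': "finite I \<Longrightarrow> pderiv (\<Sum>i\<in>I. f i) = (\<Sum>i\<in>I. pderiv (f i))"
  by (induction I rule: finite_induct) (simp_all add: pderiv_add)

lemma antideriv: "\<exists>F. pderiv F = (q :: real poly)"
proof -
  define F where "F = (\<Sum>i\<le>degree q. monom (coeff q i / real (Suc i)) (Suc i))"
  have "pderiv F = (\<Sum>i\<le>degree q. monom (coeff q i) i)"
    unfolding F_def by (simp add: pderiv_sum' pderiv_monom)
  then show ?thesis using poly_as_sum_of_monoms[of q] by auto
qed

lemma has_int_theta: "((\<lambda>\<theta>. poly q (cos \<theta>) * sin \<theta>) has_integral PInt q) {0..pi}"
proof -
  obtain F where F: "pderiv F = q" using antideriv by blast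
  have "((\<lambda>\<theta>. poly q (cos \<theta>) * sin \<theta>) has_integral (- poly F (cos pi)) - (- poly F (cos 0))) {0..pi}"
  proof (rule fundamental_theorem_of_calculus)
    show "0 \<le> pi" by simp
    fix x assume "x \<in> {0..pi}"
    have "((\<lambda>\<theta>. - poly F (cos \<theta>)) has_real_derivative poly q (cos x) * sin x) (at x)"
      unfolding F[symmetric]
      by (rule derivative_eq_intros poly_DERIV[THEN DERIV_chain2] refl | simp)+
    then show "((\<lambda>\<theta>. - poly F (cos \<theta>)) has_vector_derivative poly q (cos x) * sin x) (at x within {0..pi})"
      by (simp add: has_real_derivative_iff_has_vector_derivative[symmetric] has_field_derivative_at_within)
  qed
  moreover have "(- poly F (cos pi)) - (- poly F (cos 0)) = PInt q"
    using PInt_pderiv[of F] F by simp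
  ultimately show ?thesis by simp
qed


lemma cont_assoc: "continuous_on UNIV (assoc_legendre l m)"
  unfolding assoc_legendre_def[abs_def] Let_def
  by (cases "0 \<le> m") (auto intro!: continuous_intros continuous_on_poly)

lemma cont_sph: "continuous_on UNIV (\<lambda>p::real\<times>real. sph_harm l m (fst p) (snd p))"
  unfolding sph_harm_def
  by (intro continuous_intros continuous_on_compose2[OF cont_assoc] continuous_on_of_real) auto

definition Ysh :: "nat \<Rightarrow> int \<Rightarrow> real \<times> real \<Rightarrow> complex" where
  "Ysh l m p = sph_harm l m (fst p) (snd p)"

lemma sph_meas[measurable]: "Ysh l m \<in> borel_measurable (lborel \<Otimes>\<^sub>M lborel)"
proof -
  have "Ysh l m \<in> borel_measurable borel" unfolding Ysh_def[abs_def]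
    by (rule borel_measurable_continuous_onI[OF cont_sph])
  then show ?thesis unfolding lborel_prod using measurable_cong_sets[OF sets_lborel refl] by blast
qed


definition wt :: "real \<times> real \<Rightarrow> real" where
  "wt p = indicator ({0..<pi} \<times> {0..<2 * pi}) p * sin (fst p)"

lemma wt_nonneg: "0 \<le> wt p"
  unfolding wt_def by (auto simp: indicator_def intro!: sin_ge_zero)

lemma wt_meas[measurable]: "wt \<in> borel_measurable (lborel \<Otimes>\<^sub>M lborel)"
  unfolding wt_def[abs_def] indicator_times by measurable

lemma wt_le: "wt p \<le> indicator ({0..<pi} \<times> {0..<2 * pi}) p"
  unfolding wt_def by (auto simp: indicator_def)

lemma sphere_int:
  assumes m: "\<bar>m\<bar> \<le> int l"
  shows "(\<integral>\<^sup>+p. ennreal (wt p * (cmod (sph_harm l m (fst p) (snd p)))\<^sup>2) \<partial>lborel) = 1"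
proof -
  define n where "n = nat \<bar>m\<bar>"
  have nl: "n \<le> l" using m unfolding n_def by simp
  define h where "h \<theta> = kap l n * poly (Pq l n) (cos \<theta>)" for \<theta>
  have hsq: "(cmod (sph_harm l m \<theta> \<phi>))\<^sup>2 = h \<theta>" for \<theta> \<phi> unfolding h_def n_def using sph_sq[OF m] .
  have h0: "0 \<le> h \<theta>" for \<theta> using hsq[of \<theta> 0, symmetric] by simp
  have hm[measurable]: "h \<in> borel_measurable lborel" unfolding h_def measurable_lborel2
    by (intro borel_measurable_continuous_onI continuous_intros continuous_on_poly)
  define f where "f p = ennreal (indicator {0..<pi} (fst p) * indicator {0..<2*pi} (snd p) * sin (fst p) * h (fst p))" for p :: "real \<times> real"
  have fm: "f \<in> borel_measurable (lborel \<Otimes>\<^sub>M lborel)"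
    unfolding f_def by measurable
  have "(\<integral>\<^sup>+p. ennreal (wt p * (cmod (sph_harm l m (fst p) (snd p)))\<^sup>2) \<partial>lborel) = (\<integral>\<^sup>+p. f p \<partial>lborel)"
    unfolding f_def wt_def hsq indicator_times by (simp add: mult.commute mult.left_commute)
  also have "\<dots> = (\<integral>\<^sup>+p. f p \<partial>(lborel \<Otimes>\<^sub>M lborel))" by (simp only: lborel_prod)
  also have "\<dots> = (\<integral>\<^sup>+\<theta>. \<integral>\<^sup>+\<phi>. f (\<theta>, \<phi>) \<partial>lborel \<partial>lborel)"
    by (rule lborel.nn_integral_fst[OF fm, symmetric])
  also have "\<dots> = (\<integral>\<^sup>+\<theta>. ennreal (indicator {0..pi} \<theta> * (2 * pi * (kap l n) * (poly (Pq l n) (cos \<theta>) * sin \<theta>))) \<partial>lborel)"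
  proof (rule nn_integral_cong)
    fix \<theta> :: real
    define c where "c = indicator {0..<pi} \<theta> * sin \<theta> * h \<theta>"
    have c0: "0 \<le> c" unfolding c_def using h0[of \<theta>] by (auto simp: indicator_def intro!: mult_nonneg_nonneg sin_ge_zero)
    have "(\<integral>\<^sup>+\<phi>. f (\<theta>, \<phi>) \<partial>lborel) = (\<integral>\<^sup>+\<phi>. ennreal c * indicator {0..<2*pi} \<phi> \<partial>lborel)"
      unfolding f_def c_def by (intro nn_integral_cong) (auto simp: indicator_def)
    also have "\<dots> = ennreal c * emeasure lborel {0..<2*pi}" by (rule nn_integral_cmult_indicator) simp
    also have "\<dots> = ennreal (2 * pi * c)" using c0 by (simp add: ennreal_mult[symmetric] mult.commute)
    also have "2 * pi * c = indicator {0..pi} \<theta> * (2 * pi * (kap l n) * (poly (Pq l n) (cos \<theta>) * sin \<theta>))"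
      unfolding c_def h_def by (auto simp: indicator_def)
    finally show "(\<integral>\<^sup>+\<phi>. f (\<theta>, \<phi>) \<partial>lborel) = ennreal (indicator {0..pi} \<theta> * (2 * pi * (kap l n) * (poly (Pq l n) (cos \<theta>) * sin \<theta>)))" .
  qed
  also have "\<dots> = ennreal (2 * pi * kap l n * PInt (Pq l n))"
  proof (rule nn_integral_has_integral_lebesgue)
    fix \<theta> :: real assume t: "\<theta> \<in> {0..pi}"
    have "0 \<le> 2 * pi * h \<theta> * sin \<theta>" using h0[of \<theta>] t by (auto intro!: mult_nonneg_nonneg sin_ge_zero)
    then show "0 \<le> 2 * pi * kap l n * (poly (Pq l n) (cos \<theta>) * sin \<theta>)" unfolding h_def by (simp add: mult.assoc)
  next
    show "((\<lambda>\<theta>. 2 * pi * kap l n * (poly (Pq l n) (cos \<theta>) * sin \<theta>)) has_integral 2 * pi * kap l n * PInt (Pq l n)) {0..pi}"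
      by (rule has_integral_mult_right[OF has_int_theta])
  qed
  also have "\<dots> = 1" using PInt_Pq[OF nl] by simp
  finally show ?thesis .
qed


abbreviation lb2 :: "(real \<times> real) measure" where "lb2 \<equiv> lborel \<Otimes>\<^sub>M lborel"

definition Zf :: "(nat \<Rightarrow> int \<Rightarrow> 'a \<Rightarrow> complex) \<Rightarrow> nat \<Rightarrow> real \<times> real \<Rightarrow> 'a \<Rightarrow> complex" where
  "Zf a l p \<omega> = (\<Sum>m\<in>{- int l..int l}. Ysh l m p * a l m \<omega>)"

lemma sfin_lb2: "sigma_finite_measure lb2" by (rule lborel_pair.P.sigma_finite_measure_axioms)

context
  fixes M :: "'a measure" and C :: "nat \<Rightarrow> real" and a :: "nat \<Rightarrow> int \<Rightarrow> 'a \<Rightarrow> complex"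
  assumes G: "gaussian_isotropic_coeffs M C a"
begin

lemma a_meas'[measurable]: "a l m \<in> borel_measurable M" using a_meas[OF G] .

lemma psf: "pair_sigma_finite lb2 M"
  unfolding pair_sigma_finite_def using sfin_lb2 prob_space_imp_sigma_finite[OF PS[OF G]] by blast

lemma joint_meas:
  "(\<lambda>x. ennreal (wt (fst x) * (cmod (\<Sum>l\<in>L. d l * Zf a l (fst x) (snd x)))\<^sup>2)) \<in> borel_measurable (lb2 \<Otimes>\<^sub>M M)"
  unfolding Zf_def by measurable

lemma inner_omega:
  assumes L: "finite L"
  shows "(\<integral>\<^sup>+\<omega>. ennreal (wt p * (cmod (\<Sum>l\<in>L. d l * Zf a l p \<omega>))\<^sup>2) \<partial>M)
       = ennreal (wt p * (\<Sum>(l, m)\<in>Sigma L (\<lambda>l. {- int l..int l}). (cmod (d l * Ysh l m p))\<^sup>2 * C l))"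
proof -
  define I where "I = Sigma L (\<lambda>l. {- int l..int l})"
  have fI: "finite I" unfolding I_def using L by auto
  have Im: "\<And>l m. (l, m) \<in> I \<Longrightarrow> \<bar>m\<bar> \<le> int l" unfolding I_def by auto
  have S: "(\<Sum>l\<in>L. d l * Zf a l p \<omega>) = (\<Sum>(l, m)\<in>I. (d l * Ysh l m p) * a l m \<omega>)" for \<omega>
    unfolding Zf_def I_def using L
    by (simp add: sum_distrib_left sum.Sigma mult.assoc)
  note V = var_sum[OF G fI Im, of "\<lambda>l m. d l * Ysh l m p"]
  have "(\<integral>\<^sup>+\<omega>. ennreal (wt p * (cmod (\<Sum>l\<in>L. d l * Zf a l p \<omega>))\<^sup>2) \<partial>M)
      = (\<integral>\<^sup>+\<omega>. ennreal (wt p) * ennreal ((cmod (\<Sum>(l, m)\<in>I. (d l * Ysh l m p) * a l m \<omega>))\<^sup>2) \<partial>M)"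
    unfolding S using wt_nonneg by (simp add: ennreal_mult)
  also have "\<dots> = ennreal (wt p) * (\<integral>\<^sup>+\<omega>. ennreal ((cmod (\<Sum>(l, m)\<in>I. (d l * Ysh l m p) * a l m \<omega>))\<^sup>2) \<partial>M)"
    by (rule nn_integral_cmult) measurable
  also have "(\<integral>\<^sup>+\<omega>. ennreal ((cmod (\<Sum>(l, m)\<in>I. (d l * Ysh l m p) * a l m \<omega>))\<^sup>2) \<partial>M)
      = ennreal (\<Sum>(l, m)\<in>I. (cmod (d l * Ysh l m p))\<^sup>2 * C l)"
    using V by (subst nn_integral_eq_integral) auto
  also have "ennreal (wt p) * ennreal (\<Sum>(l, m)\<in>I. (cmod (d l * Ysh l m p))\<^sup>2 * C l)
      = ennreal (wt p * (\<Sum>(l, m)\<in>I. (cmod (d l * Ysh l m p))\<^sup>2 * C l))"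
  proof -
    have "0 \<le> (\<Sum>(l, m)\<in>I. (cmod (d l * Ysh l m p))\<^sup>2 * C l)"
      using C_nonneg[OF G] by (auto intro!: sum_nonneg simp: case_prod_beta)
    then show ?thesis using wt_nonneg[of p] by (simp add: ennreal_mult)
  qed
  finally show ?thesis unfolding I_def .
qed

lemma CORE:
  assumes L: "finite L"
  shows "(\<integral>\<^sup>+\<omega>. \<integral>\<^sup>+p. ennreal (wt p * (cmod (\<Sum>l\<in>L. d l * Zf a l p \<omega>))\<^sup>2) \<partial>lb2 \<partial>M)
       = ennreal (\<Sum>l\<in>L. (cmod (d l))\<^sup>2 * C l * (2 * real l + 1))"
proof -
  define I where "I = Sigma L (\<lambda>l. {- int l..int l})"
  have fI: "finite I" unfolding I_def using L by auto
  have jm: "(\<lambda>(p, \<omega>). ennreal (wt p * (cmod (\<Sum>l\<in>L. d l * Zf a l p \<omega>))\<^sup>2)) \<in> borel_measurable (lb2 \<Otimes>\<^sub>M M)"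
    using joint_meas[where L=L and d=d] by (simp add: case_prod_beta')
  have "(\<integral>\<^sup>+\<omega>. \<integral>\<^sup>+p. ennreal (wt p * (cmod (\<Sum>l\<in>L. d l * Zf a l p \<omega>))\<^sup>2) \<partial>lb2 \<partial>M)
      = (\<integral>\<^sup>+p. \<integral>\<^sup>+\<omega>. ennreal (wt p * (cmod (\<Sum>l\<in>L. d l * Zf a l p \<omega>))\<^sup>2) \<partial>M \<partial>lb2)"
    by (rule pair_sigma_finite.Fubini'[OF psf jm])
  also have "\<dots> = (\<integral>\<^sup>+p. ennreal (wt p * (\<Sum>(l, m)\<in>I. (cmod (d l * Ysh l m p))\<^sup>2 * C l)) \<partial>lb2)"
    unfolding I_def by (simp add: inner_omega[OF L])
  also have "\<dots> = (\<integral>\<^sup>+p. (\<Sum>(l, m)\<in>I. ennreal ((cmod (d l))\<^sup>2 * C l) * ennreal (wt p * (cmod (Ysh l m p))\<^sup>2)) \<partial>lb2)"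
  proof (rule nn_integral_cong)
    fix p
    have "wt p * (\<Sum>(l, m)\<in>I. (cmod (d l * Ysh l m p))\<^sup>2 * C l) = (\<Sum>(l, m)\<in>I. ((cmod (d l))\<^sup>2 * C l) * (wt p * (cmod (Ysh l m p))\<^sup>2))"
      by (simp add: sum_distrib_left case_prod_beta norm_mult power_mult_distrib algebra_simps)
    also have "ennreal \<dots> = (\<Sum>(l, m)\<in>I. ennreal ((cmod (d l))\<^sup>2 * C l) * ennreal (wt p * (cmod (Ysh l m p))\<^sup>2))"
      using wt_nonneg[of p] C_nonneg[OF G]
      by (subst sum_ennreal[symmetric]) (auto simp: case_prod_beta ennreal_mult intro!: mult_nonneg_nonneg sum.cong)
    finally show "ennreal (wt p * (\<Sum>(l, m)\<in>I. (cmod (d l * Ysh l m p))\<^sup>2 * C l)) = \<dots>" .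
  qed
  also have "\<dots> = (\<Sum>(l, m)\<in>I. ennreal ((cmod (d l))\<^sup>2 * C l) * (\<integral>\<^sup>+p. ennreal (wt p * (cmod (Ysh l m p))\<^sup>2) \<partial>lb2))"
    by (subst nn_integral_sum) (auto simp: case_prod_beta intro!: sum.cong nn_integral_cmult)
  also have "\<dots> = (\<Sum>(l, m)\<in>I. ennreal ((cmod (d l))\<^sup>2 * C l))"
  proof (rule sum.cong[OF refl])
    fix x assume "x \<in> I"
    then obtain l m where x: "x = (l, m)" "\<bar>m\<bar> \<le> int l" unfolding I_def by auto
    have "(\<integral>\<^sup>+p. ennreal (wt p * (cmod (Ysh l m p))\<^sup>2) \<partial>lb2) = 1"
      using sphere_int[OF x(2)] unfolding Ysh_def lborel_prod .
    then show "(case x of (l, m) \<Rightarrow> ennreal ((cmod (d l))\<^sup>2 * C l) * (\<integral>\<^sup>+p. ennreal (wt p * (cmod (Ysh l m p))\<^sup>2) \<partial>lb2))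
        = (case x of (l, m) \<Rightarrow> ennreal ((cmod (d l))\<^sup>2 * C l))" using x by simp
  qed
  also have "\<dots> = ennreal (\<Sum>(l, m)\<in>I. (cmod (d l))\<^sup>2 * C l)"
    using C_nonneg[OF G] by (simp add: case_prod_beta sum_ennreal)
  also have "(\<Sum>(l, m)\<in>I. (cmod (d l))\<^sup>2 * C l) = (\<Sum>l\<in>L. (cmod (d l))\<^sup>2 * C l * (2 * real l + 1))"
  proof -
    have "(\<Sum>(l, m)\<in>I. (cmod (d l))\<^sup>2 * C l) = (\<Sum>l\<in>L. \<Sum>m\<in>{- int l..int l}. (cmod (d l))\<^sup>2 * C l)"
      unfolding I_def using L by (subst sum.Sigma) auto
    also have "\<dots> = (\<Sum>l\<in>L. (cmod (d l))\<^sup>2 * C l * (2 * real l + 1))"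
    proof (rule sum.cong[OF refl])
      fix l
      have "card {- int l..int l} = 2 * l + 1" by simp
      then show "(\<Sum>m\<in>{- int l..int l}. (cmod (d l))\<^sup>2 * C l) = (cmod (d l))\<^sup>2 * C l * (2 * real l + 1)"
        by simp
    qed
    finally show ?thesis .
  qed
  finally show ?thesis .
qed

end


lemma cc_one: "complex_of_real (sqrt (4 * pi / (2 * real l + 1))) * cnj (sph_harm l 0 0 0) = 1"
proof -
  have a1: "assoc_legendre l 0 1 = 1" unfolding assoc_legendre_def Let_def using legendre_at1[of l] by simp
  have sh: "sh_const l 0 = sqrt ((2 * real l + 1) / (4 * pi))" unfolding sh_const_def by simp
  have "sph_harm l 0 0 0 = complex_of_real (sqrt ((2 * real l + 1) / (4 * pi)))"
    unfolding sph_harm_def sh using a1 by simp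
  then have "complex_of_real (sqrt (4 * pi / (2 * real l + 1))) * cnj (sph_harm l 0 0 0)
      = complex_of_real (sqrt (4 * pi / (2 * real l + 1)) * sqrt ((2 * real l + 1) / (4 * pi)))" by simp
  also have "sqrt (4 * pi / (2 * real l + 1)) * sqrt ((2 * real l + 1) / (4 * pi)) = 1"
  proof -
    have "2 * real l + 1 \<noteq> 0" "4 * pi \<noteq> 0" by auto
    then have "(4 * pi / (2 * real l + 1)) * ((2 * real l + 1) / (4 * pi)) = 1" by simp
    then show ?thesis by (metis real_sqrt_mult real_sqrt_one)
  qed
  finally show ?thesis by simp
qed

definition AB :: "real \<Rightarrow> real \<Rightarrow> real \<Rightarrow> nat \<Rightarrow> real \<Rightarrow> real" where
  "AB c D k l t = Al c D k l t + Bl c D k l t"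

lemma inner_sum: "(\<Sum>m\<in>{- int l..int l}. sph_harm l m \<theta> \<phi> * xi a c D k l m t \<omega>)
   = complex_of_real (AB c D k l t) * Zf a l (\<theta>, \<phi>) \<omega>"
proof -
  have "xi a c D k l m t \<omega> = complex_of_real (AB c D k l t) * a l m \<omega>" for m
    using cc_one[of l] unfolding xi_def AB_def
    by (metis (no_types, lifting) mult.commute mult.left_commute mult_1)
  then show ?thesis unfolding Zf_def Ysh_def by (simp add: sum_distrib_left algebra_simps)
qed

lemma sol_eq: "sol a c D k \<theta> \<phi> t \<omega> = complex_of_real (exp (- (c\<^sup>2 * t) / (2 * D))) *
   (\<Sum>l. complex_of_real (AB c D k l t) * Zf a l (\<theta>, \<phi>) \<omega>)"
  unfolding sol_def inner_sum ..


lemma amgm: "0 \<le> w \<Longrightarrow> 0 \<le> x \<Longrightarrow> w * x \<le> (real l + 1)\<^sup>2 / 2 * (w * x\<^sup>2) + w / (2 * (real l + 1)\<^sup>2)"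
proof -
  assume w: "0 \<le> w" and x: "0 \<le> x"
  define y where "y = real l + 1"
  have y: "0 < y" unfolding y_def by simp
  have "0 \<le> (y * x - 1 / y)\<^sup>2" by simp
  then have "2 * x \<le> y\<^sup>2 * x\<^sup>2 + 1 / y\<^sup>2" using y by (simp add: power2_eq_square field_simps)
  then have "w * (2 * x) \<le> w * (y\<^sup>2 * x\<^sup>2 + 1 / y\<^sup>2)" using w by (rule mult_left_mono)
  then show ?thesis unfolding y_def[symmetric] by (simp add: field_simps)
qed

lemma int_wt: "(\<integral>\<^sup>+p. ennreal (wt p) \<partial>lb2) \<le> ennreal (2 * pi\<^sup>2)"
proof -
  have "(\<integral>\<^sup>+p. ennreal (wt p) \<partial>lb2) \<le> (\<integral>\<^sup>+p. indicator ({0..<pi} \<times> {0..<2 * pi}) p \<partial>lb2)"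
    by (intro nn_integral_mono) (auto simp: wt_le indicator_def wt_def intro: sin_le_one)
  also have "\<dots> = emeasure lb2 ({0..<pi} \<times> {0..<2 * pi})" by simp
  also have "\<dots> = emeasure lborel {0..<pi} * emeasure lborel {0..<2 * pi}"
    by (rule lborel.emeasure_pair_measure_Times) auto
  also have "\<dots> = ennreal (2 * pi\<^sup>2)" by (simp add: ennreal_mult[symmetric] power2_eq_square)
  finally show ?thesis .
qed

context
  fixes M :: "'a measure" and C :: "nat \<Rightarrow> real" and a :: "nat \<Rightarrow> int \<Rightarrow> 'a \<Rightarrow> complex"
  assumes G: "gaussian_isotropic_coeffs M C a"
    and SC: "summable (\<lambda>l. (2 * real l + 1) ^ 3 * C l)"
begin

interpretation prob_space M by (rule PS[OF G])

lemma a_m[measurable]: "a l m \<in> borel_measurable M" using a_meas[OF G] .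

lemma good_AE: "AE \<omega> in M. AE p in lb2. 0 < wt p \<longrightarrow> summable (\<lambda>l. cmod (Zf a l p \<omega>))"
proof -
  define f where "f l p \<omega> = ennreal ((real l + 1)\<^sup>2 / 2 * (wt p * (cmod (Zf a l p \<omega>))\<^sup>2)) + ennreal (wt p / (2 * (real l + 1)\<^sup>2))" for l p \<omega>
  define Q where "Q p \<omega> = (\<Sum>l. ennreal (wt p * cmod (Zf a l p \<omega>)))" for p \<omega>
  have fm[measurable]: "(\<lambda>x. f l (snd x) (fst x)) \<in> borel_measurable (M \<Otimes>\<^sub>M lb2)" for l
    unfolding f_def Zf_def by measurable
  have fm2: "(\<lambda>(x, y). f l y x) \<in> borel_measurable (M \<Otimes>\<^sub>M lb2)" for l
    using fm[of l] by (simp add: case_prod_beta')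
  have fmp[measurable]: "f l p \<in> borel_measurable M" for l p unfolding f_def Zf_def by measurable
  have fmw[measurable]: "(\<lambda>p. f l p \<omega>) \<in> borel_measurable lb2" for l \<omega> unfolding f_def Zf_def by measurable
  have Qm: "(\<lambda>(x, y). Q y x) \<in> borel_measurable (M \<Otimes>\<^sub>M lb2)"
  proof -
    have "(\<lambda>x. Q (snd x) (fst x)) \<in> borel_measurable (M \<Otimes>\<^sub>M lb2)" unfolding Q_def Zf_def by measurable
    then show ?thesis by (simp add: case_prod_beta')
  qed
  have Qmw[measurable]: "(\<lambda>p. Q p \<omega>) \<in> borel_measurable lb2" for \<omega> unfolding Q_def Zf_def by measurable
  have Qle: "Q p \<omega> \<le> (\<Sum>l. f l p \<omega>)" for p \<omega>
    unfolding Q_def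
  proof (rule suminf_le)
    fix l
    have "wt p * cmod (Zf a l p \<omega>) \<le> (real l + 1)\<^sup>2 / 2 * (wt p * (cmod (Zf a l p \<omega>))\<^sup>2) + wt p / (2 * (real l + 1)\<^sup>2)"
      by (rule amgm[OF wt_nonneg norm_ge_zero])
    then have "ennreal (wt p * cmod (Zf a l p \<omega>)) \<le> ennreal ((real l + 1)\<^sup>2 / 2 * (wt p * (cmod (Zf a l p \<omega>))\<^sup>2) + wt p / (2 * (real l + 1)\<^sup>2))"
      by (rule ennreal_leI)
    also have "\<dots> = f l p \<omega>" unfolding f_def using wt_nonneg[of p]
      by (intro ennreal_plus) auto
    finally show "ennreal (wt p * cmod (Zf a l p \<omega>)) \<le> f l p \<omega>" .
  qed auto
  define b where "b l = (real l + 1)\<^sup>2 / 2 * (C l * (2 * real l + 1)) + 2 * pi\<^sup>2 / (2 * (real l + 1)\<^sup>2)" for l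
  have fint: "(\<integral>\<^sup>+\<omega>. \<integral>\<^sup>+p. f l p \<omega> \<partial>lb2 \<partial>M) \<le> ennreal (b l)" for l
  proof -
    have c1: "(\<integral>\<^sup>+\<omega>. \<integral>\<^sup>+p. ennreal (wt p * (cmod (\<Sum>j\<in>{l}. (\<lambda>_. 1) j * Zf a j p \<omega>))\<^sup>2) \<partial>lb2 \<partial>M)
        = ennreal (C l * (2 * real l + 1))"
      using CORE[OF G, of "{l}" "\<lambda>_. 1"] by simp
    have "(\<integral>\<^sup>+\<omega>. \<integral>\<^sup>+p. f l p \<omega> \<partial>lb2 \<partial>M) = (\<integral>\<^sup>+\<omega>. ennreal ((real l + 1)\<^sup>2 / 2) * (\<integral>\<^sup>+p. ennreal (wt p * (cmod (Zf a l p \<omega>))\<^sup>2) \<partial>lb2)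
            + ennreal (1 / (2 * (real l + 1)\<^sup>2)) * (\<integral>\<^sup>+p. ennreal (wt p) \<partial>lb2) \<partial>M)"
    proof (rule nn_integral_cong)
      fix \<omega>
      have e1: "ennreal ((real l + 1)\<^sup>2 / 2 * (wt p * (cmod (Zf a l p \<omega>))\<^sup>2)) = ennreal ((real l + 1)\<^sup>2 / 2) * ennreal (wt p * (cmod (Zf a l p \<omega>))\<^sup>2)" for p
        using wt_nonneg[of p] by (intro ennreal_mult) auto
      have e2: "ennreal (wt p / (2 * (real l + 1)\<^sup>2)) = ennreal (1 / (2 * (real l + 1)\<^sup>2)) * ennreal (wt p)" for p
        using wt_nonneg[of p] by (simp add: ennreal_mult[symmetric])
      show "(\<integral>\<^sup>+p. f l p \<omega> \<partial>lb2) = ennreal ((real l + 1)\<^sup>2 / 2) * (\<integral>\<^sup>+p. ennreal (wt p * (cmod (Zf a l p \<omega>))\<^sup>2) \<partial>lb2)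
            + ennreal (1 / (2 * (real l + 1)\<^sup>2)) * (\<integral>\<^sup>+p. ennreal (wt p) \<partial>lb2)"
      proof -
        have m: "(\<lambda>p. ennreal (wt p * (cmod (Zf a l p \<omega>))\<^sup>2)) \<in> borel_measurable lb2" unfolding Zf_def by measurable
        have m2: "(\<lambda>p. ennreal (wt p)) \<in> borel_measurable lb2" by measurable
        show ?thesis unfolding f_def e1 e2
          apply (subst nn_integral_add)
            apply (rule borel_measurable_times_ennreal[OF borel_measurable_const m])
           apply (rule borel_measurable_times_ennreal[OF borel_measurable_const m2])
          apply (simp only: nn_integral_cmult[OF m] nn_integral_cmult[OF m2])
          done
      qed
    qed
    also have "\<dots> = ennreal ((real l + 1)\<^sup>2 / 2) * (\<integral>\<^sup>+\<omega>. \<integral>\<^sup>+p. ennreal (wt p * (cmod (Zf a l p \<omega>))\<^sup>2) \<partial>lb2 \<partial>M)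
            + ennreal (1 / (2 * (real l + 1)\<^sup>2)) * (\<integral>\<^sup>+p. ennreal (wt p) \<partial>lb2)"
    proof -
      have m1: "(\<lambda>\<omega>. \<integral>\<^sup>+p. ennreal (wt p * (cmod (Zf a l p \<omega>))\<^sup>2) \<partial>lb2) \<in> borel_measurable M"
      proof (rule sigma_finite_measure.borel_measurable_nn_integral[OF sfin_lb2])
        have "(\<lambda>x. ennreal (wt (snd x) * (cmod (Zf a l (snd x) (fst x)))\<^sup>2)) \<in> borel_measurable (M \<Otimes>\<^sub>M lb2)"
          unfolding Zf_def by measurable
        then show "(\<lambda>(x, y). ennreal (wt y * (cmod (Zf a l y x))\<^sup>2)) \<in> borel_measurable (M \<Otimes>\<^sub>M lb2)"
          by (simp add: case_prod_beta')
      qed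
      show ?thesis
        apply (subst nn_integral_add)
          apply (rule borel_measurable_times_ennreal[OF borel_measurable_const m1])
         apply (rule borel_measurable_const)
        apply (subst nn_integral_cmult[OF m1])
        apply (simp only: nn_integral_const emeasure_space_1 mult_1_right)
        done
    qed
    also have "\<dots> \<le> ennreal ((real l + 1)\<^sup>2 / 2) * ennreal (C l * (2 * real l + 1))
            + ennreal (1 / (2 * (real l + 1)\<^sup>2)) * ennreal (2 * pi\<^sup>2)"
      using c1 int_wt by (intro add_mono mult_left_mono) auto
    also have "\<dots> = ennreal (b l)"
    proof -
      have c: "0 \<le> C l" using C_nonneg[OF G] .
      have "ennreal ((real l + 1)\<^sup>2 / 2) * ennreal (C l * (2 * real l + 1)) = ennreal ((real l + 1)\<^sup>2 / 2 * (C l * (2 * real l + 1)))"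
        using c by (intro ennreal_mult[symmetric]) auto
      moreover have "ennreal (1 / (2 * (real l + 1)\<^sup>2)) * ennreal (2 * pi\<^sup>2) = ennreal (1 / (2 * (real l + 1)\<^sup>2) * (2 * pi\<^sup>2))"
        by (intro ennreal_mult[symmetric]) auto
      moreover have "ennreal ((real l + 1)\<^sup>2 / 2 * (C l * (2 * real l + 1))) + ennreal (1 / (2 * (real l + 1)\<^sup>2) * (2 * pi\<^sup>2))
          = ennreal ((real l + 1)\<^sup>2 / 2 * (C l * (2 * real l + 1)) + 1 / (2 * (real l + 1)\<^sup>2) * (2 * pi\<^sup>2))"
        using c by (intro ennreal_plus[symmetric]) auto
      ultimately show ?thesis unfolding b_def by simp
    qed
    finally show ?thesis .
  qed
  have bs: "summable b"
  proof -
    have s1: "summable (\<lambda>l. (real l + 1)\<^sup>2 / 2 * (C l * (2 * real l + 1)))"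
    proof (rule summable_comparison_test_ev[OF _ SC])
      show "\<forall>\<^sub>F l in sequentially. norm ((real l + 1)\<^sup>2 / 2 * (C l * (2 * real l + 1))) \<le> (2 * real l + 1) ^ 3 * C l"
      proof (intro always_eventually allI)
        fix l
        have c: "0 \<le> C l" using C_nonneg[OF G] .
        have "(real l + 1)\<^sup>2 / 2 \<le> (2 * real l + 1)\<^sup>2" by (simp add: power2_eq_square algebra_simps)
        then have "(real l + 1)\<^sup>2 / 2 * (C l * (2 * real l + 1)) \<le> (2 * real l + 1)\<^sup>2 * (C l * (2 * real l + 1))"
          using c by (intro mult_right_mono) auto
        then show "norm ((real l + 1)\<^sup>2 / 2 * (C l * (2 * real l + 1))) \<le> (2 * real l + 1) ^ 3 * C l"
          using c by (simp add: power2_eq_square power3_eq_cube algebra_simps)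
      qed
    qed
    have s2: "summable (\<lambda>l. 2 * pi\<^sup>2 / (2 * (real l + 1)\<^sup>2))"
    proof -
      have "summable (\<lambda>n. 1 / real ((n + 1)\<^sup>2))" using inverse_squares_sums by (rule sums_summable)
      then have "summable (\<lambda>n. pi\<^sup>2 * (1 / real ((n + 1)\<^sup>2)))" by (rule summable_mult)
      then show ?thesis by (simp add: field_simps)
    qed
    show ?thesis unfolding b_def using summable_add[OF s1 s2] .
  qed
  have b0: "0 \<le> b l" for l unfolding b_def using C_nonneg[OF G, of l] by simp
  have "(\<integral>\<^sup>+\<omega>. \<integral>\<^sup>+p. Q p \<omega> \<partial>lb2 \<partial>M) \<le> (\<integral>\<^sup>+\<omega>. \<integral>\<^sup>+p. (\<Sum>l. f l p \<omega>) \<partial>lb2 \<partial>M)"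
    by (rule nn_integral_mono, rule nn_integral_mono, rule Qle)
  also have "\<dots> = (\<integral>\<^sup>+\<omega>. (\<Sum>l. \<integral>\<^sup>+p. f l p \<omega> \<partial>lb2) \<partial>M)"
    by (rule nn_integral_cong, rule nn_integral_suminf, rule fmw)
  also have "\<dots> = (\<Sum>l. \<integral>\<^sup>+\<omega>. \<integral>\<^sup>+p. f l p \<omega> \<partial>lb2 \<partial>M)"
    by (rule nn_integral_suminf) (rule sigma_finite_measure.borel_measurable_nn_integral[OF sfin_lb2 fm2])
  also have "\<dots> \<le> (\<Sum>l. ennreal (b l))" by (intro suminf_le fint) auto
  also have "\<dots> = ennreal (\<Sum>l. b l)" using b0 bs by (rule suminf_ennreal2)
  finally have le: "(\<integral>\<^sup>+\<omega>. \<integral>\<^sup>+p. Q p \<omega> \<partial>lb2 \<partial>M) \<le> ennreal (\<Sum>l. b l)" .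
  have fin: "(\<integral>\<^sup>+\<omega>. \<integral>\<^sup>+p. Q p \<omega> \<partial>lb2 \<partial>M) \<noteq> \<infinity>"
    using neq_top_trans[OF ennreal_neq_top le] by simp
  have AE1: "AE \<omega> in M. (\<integral>\<^sup>+p. Q p \<omega> \<partial>lb2) \<noteq> \<infinity>"
    by (rule nn_integral_PInf_AE[OF sigma_finite_measure.borel_measurable_nn_integral[OF sfin_lb2 Qm] fin])
  show ?thesis
  proof (rule AE_mp[OF AE1], rule AE_I2, rule impI)
    fix \<omega> assume "(\<integral>\<^sup>+p. Q p \<omega> \<partial>lb2) \<noteq> \<infinity>"
    then have AE2: "AE p in lb2. Q p \<omega> \<noteq> \<infinity>" by (rule nn_integral_PInf_AE[OF Qmw])
    show "AE p in lb2. 0 < wt p \<longrightarrow> summable (\<lambda>l. cmod (Zf a l p \<omega>))"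
    proof (rule AE_mp[OF AE2], rule AE_I2, rule impI, rule impI)
      fix p assume q: "Q p \<omega> \<noteq> \<infinity>" and w: "0 < wt p"
      have "summable (\<lambda>l. wt p * cmod (Zf a l p \<omega>))"
        using q w unfolding Q_def by (intro summable_suminf_not_top) auto
      then have "summable (\<lambda>l. (1 / wt p) * (wt p * cmod (Zf a l p \<omega>)))" by (rule summable_mult)
      then show "summable (\<lambda>l. cmod (Zf a l p \<omega>))" using w by simp
    qed
  qed
qed

end


context
  fixes M :: "'a measure" and C :: "nat \<Rightarrow> real" and a :: "nat \<Rightarrow> int \<Rightarrow> 'a \<Rightarrow> complex"
    and c D k :: real
  assumes G: "gaussian_isotropic_coeffs M C a"
    and SC: "summable (\<lambda>l. (2 * real l + 1) ^ 3 * C l)"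
    and c: "0 < c" and D: "0 < D" and k: "0 < k"
begin

interpretation prob_space M by (rule PS[OF G])

lemma a_m2[measurable]: "a l m \<in> borel_measurable M" using a_meas[OF G] .

lemma ev_large: "\<forall>\<^sub>F l in sequentially. \<not> real l \<le> lstar c D k"
proof -
  obtain N :: nat where "lstar c D k < real N" using reals_Archimedean2 by blast
  then show ?thesis by (intro eventually_sequentiallyI[of N]) auto
qed

lemma summ_AB:
  assumes s: "summable (\<lambda>l. cmod (Zf a l p \<omega>))" and t: "0 \<le> t"
  shows "summable (\<lambda>l. complex_of_real (AB c D k l t) * Zf a l p \<omega>)"
proof (rule summable_comparison_test_ev)
  show "\<forall>\<^sub>F l in sequentially. norm (complex_of_real (AB c D k l t) * Zf a l p \<omega>) \<le> (1 + \<alpha> c D * t) * cmod (Zf a l p \<omega>)"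
    using ev_large
  proof (rule eventually_mono)
    fix l assume "\<not> real l \<le> lstar c D k"
    from AB_bound[OF c D k this t] have "\<bar>AB c D k l t\<bar> \<le> 1 + \<alpha> c D * t" unfolding AB_def .
    then show "norm (complex_of_real (AB c D k l t) * Zf a l p \<omega>) \<le> (1 + \<alpha> c D * t) * cmod (Zf a l p \<omega>)"
      by (simp add: norm_mult mult_right_mono)
  qed
  show "summable (\<lambda>l. (1 + \<alpha> c D * t) * cmod (Zf a l p \<omega>))" using s by (rule summable_mult)
qed

lemma sol_series:
  assumes s: "summable (\<lambda>l. cmod (Zf a l p \<omega>))" and t: "0 \<le> t"
  shows "(\<lambda>l. complex_of_real (gg c D k l t) * Zf a l p \<omega>) sums sol a c D k (fst p) (snd p) t \<omega>"
proof -
  have "(\<lambda>l. complex_of_real (exp (- (c\<^sup>2 * t) / (2 * D))) * (complex_of_real (AB c D k l t) * Zf a l p \<omega>))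
        sums (complex_of_real (exp (- (c\<^sup>2 * t) / (2 * D))) * (\<Sum>l. complex_of_real (AB c D k l t) * Zf a l p \<omega>))"
    by (rule sums_mult[OF summable_sums[OF summ_AB[OF s t]]])
  moreover have "sol a c D k (fst p) (snd p) t \<omega> = complex_of_real (exp (- (c\<^sup>2 * t) / (2 * D))) * (\<Sum>l. complex_of_real (AB c D k l t) * Zf a l p \<omega>)"
    using sol_eq[of a c D k "fst p" "snd p" t \<omega>] by simp
  moreover have "(\<lambda>l. complex_of_real (gg c D k l t) * Zf a l p \<omega>) = (\<lambda>l. complex_of_real (exp (- (c\<^sup>2 * t) / (2 * D))) * (complex_of_real (AB c D k l t) * Zf a l p \<omega>))"
    by (rule ext) (simp add: gg_def[OF c D k] AB_def)
  ultimately show ?thesis by simp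
qed

definition L0 where "L0 = 2 * \<alpha> c D + c * k"
definition SS where "SS = (\<Sum>l. (2 * real l + 1) ^ 3 * C l)"

lemma L0_nonneg: "0 \<le> L0" unfolding L0_def using alpha_pos[OF c D k] c k by simp

lemma SS_nonneg: "0 \<le> SS" unfolding SS_def using C_nonneg[OF G] by (intro suminf_nonneg SC) simp

lemma I_bound:
  assumes t: "0 < t" and h: "0 < h"
  shows "(\<integral>\<^sup>+\<omega>. \<integral>\<^sup>+p. ennreal (wt p * (cmod (sol a c D k (fst p) (snd p) (t + h) \<omega> - sol a c D k (fst p) (snd p) t \<omega>))\<^sup>2) \<partial>lb2 \<partial>M)
     \<le> ennreal (h\<^sup>2 * L0\<^sup>2 * SS)"
proof -
  define d where "d l = complex_of_real (gg c D k l (t + h) - gg c D k l t)" for l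
  define F where "F p \<omega> = ennreal (wt p * (cmod (sol a c D k (fst p) (snd p) (t + h) \<omega> - sol a c D k (fst p) (snd p) t \<omega>))\<^sup>2)" for p \<omega>
  define Gn where "Gn n p \<omega> = ennreal (wt p * (cmod (\<Sum>l\<in>{..<n}. d l * Zf a l p \<omega>))\<^sup>2)" for n p \<omega>
  have Gm[measurable]: "(\<lambda>p. Gn n p \<omega>) \<in> borel_measurable lb2" for n \<omega> unfolding Gn_def Zf_def by measurable
  have Gm2: "(\<lambda>\<omega>. \<integral>\<^sup>+p. Gn n p \<omega> \<partial>lb2) \<in> borel_measurable M" for n
  proof (rule sigma_finite_measure.borel_measurable_nn_integral[OF sfin_lb2])
    have "(\<lambda>x. Gn n (snd x) (fst x)) \<in> borel_measurable (M \<Otimes>\<^sub>M lb2)" unfolding Gn_def Zf_def by measurable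
    then show "(\<lambda>(x, y). Gn n y x) \<in> borel_measurable (M \<Otimes>\<^sub>M lb2)" by (simp add: case_prod_beta')
  qed
  have pt: "F p \<omega> \<le> liminf (\<lambda>n. Gn n p \<omega>)" if imp: "0 < wt p \<longrightarrow> summable (\<lambda>l. cmod (Zf a l p \<omega>))" for p \<omega>
  proof (cases "wt p = 0")
    case True then show ?thesis unfolding F_def by simp
  next
    case False
    then have w: "0 < wt p" using wt_nonneg[of p] by simp
    then have s: "summable (\<lambda>l. cmod (Zf a l p \<omega>))" using imp by simp
    have "(\<lambda>l. complex_of_real (gg c D k l (t + h)) * Zf a l p \<omega> - complex_of_real (gg c D k l t) * Zf a l p \<omega>)
          sums (sol a c D k (fst p) (snd p) (t + h) \<omega> - sol a c D k (fst p) (snd p) t \<omega>)"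
      using t h by (intro sums_diff sol_series[OF s]) auto
    then have "(\<lambda>l. d l * Zf a l p \<omega>) sums (sol a c D k (fst p) (snd p) (t + h) \<omega> - sol a c D k (fst p) (snd p) t \<omega>)"
      unfolding d_def by (simp add: algebra_simps)
    then have "(\<lambda>n. \<Sum>l<n. d l * Zf a l p \<omega>) \<longlonglongrightarrow> (sol a c D k (fst p) (snd p) (t + h) \<omega> - sol a c D k (fst p) (snd p) t \<omega>)"
      unfolding sums_def .
    then have "(\<lambda>n. Gn n p \<omega>) \<longlonglongrightarrow> F p \<omega>"
      unfolding Gn_def F_def by (intro tendsto_ennrealI tendsto_intros)
    then have "liminf (\<lambda>n. Gn n p \<omega>) = F p \<omega>" by (intro lim_imp_Liminf) auto
    then show ?thesis by simp
  qed
  have AEpt: "AE \<omega> in M. (\<integral>\<^sup>+p. F p \<omega> \<partial>lb2) \<le> liminf (\<lambda>n. \<integral>\<^sup>+p. Gn n p \<omega> \<partial>lb2)"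
    using good_AE[OF G SC]
  proof (rule eventually_mono)
    fix \<omega> assume "AE p in lb2. 0 < wt p \<longrightarrow> summable (\<lambda>l. cmod (Zf a l p \<omega>))"
    then have "AE p in lb2. F p \<omega> \<le> liminf (\<lambda>n. Gn n p \<omega>)" by (rule eventually_mono) (rule pt)
    then have "(\<integral>\<^sup>+p. F p \<omega> \<partial>lb2) \<le> (\<integral>\<^sup>+p. liminf (\<lambda>n. Gn n p \<omega>) \<partial>lb2)" by (rule nn_integral_mono_AE)
    also have "\<dots> \<le> liminf (\<lambda>n. \<integral>\<^sup>+p. Gn n p \<omega> \<partial>lb2)" by (rule nn_integral_liminf) (rule Gm)
    finally show "(\<integral>\<^sup>+p. F p \<omega> \<partial>lb2) \<le> liminf (\<lambda>n. \<integral>\<^sup>+p. Gn n p \<omega> \<partial>lb2)" .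
  qed
  have bnd: "(\<integral>\<^sup>+\<omega>. \<integral>\<^sup>+p. Gn n p \<omega> \<partial>lb2 \<partial>M) \<le> ennreal (h\<^sup>2 * L0\<^sup>2 * SS)" for n
  proof -
    have "(\<integral>\<^sup>+\<omega>. \<integral>\<^sup>+p. Gn n p \<omega> \<partial>lb2 \<partial>M) = ennreal (\<Sum>l\<in>{..<n}. (cmod (d l))\<^sup>2 * C l * (2 * real l + 1))"
      unfolding Gn_def by (rule CORE[OF G]) simp
    also have "\<dots> \<le> ennreal (h\<^sup>2 * L0\<^sup>2 * SS)"
    proof (rule ennreal_leI)
      have "(\<Sum>l\<in>{..<n}. (cmod (d l))\<^sup>2 * C l * (2 * real l + 1)) \<le> (\<Sum>l\<in>{..<n}. h\<^sup>2 * L0\<^sup>2 * ((2 * real l + 1) ^ 3 * C l))"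
      proof (rule sum_mono)
        fix l
        have dl: "cmod (d l) \<le> h * (L0 * (real l + 1))"
          unfolding d_def L0_def of_real_diff[symmetric] norm_of_real using gg_lip[OF c D k, of t h l] t h by simp
        have "(cmod (d l))\<^sup>2 \<le> (h * (L0 * (real l + 1)))\<^sup>2" using dl by (intro power_mono) auto
        also have "\<dots> \<le> h\<^sup>2 * L0\<^sup>2 * (2 * real l + 1)\<^sup>2"
        proof -
          have "(real l + 1)\<^sup>2 \<le> (2 * real l + 1)\<^sup>2" by (intro power_mono) auto
          then have "L0\<^sup>2 * (real l + 1)\<^sup>2 \<le> L0\<^sup>2 * (2 * real l + 1)\<^sup>2" by (intro mult_left_mono) auto
          then show ?thesis using h by (simp add: power_mult_distrib)
        qed
        finally have "(cmod (d l))\<^sup>2 * (C l * (2 * real l + 1)) \<le> h\<^sup>2 * L0\<^sup>2 * (2 * real l + 1)\<^sup>2 * (C l * (2 * real l + 1))"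
          using C_nonneg[OF G, of l] by (intro mult_right_mono) auto
        then show "(cmod (d l))\<^sup>2 * C l * (2 * real l + 1) \<le> h\<^sup>2 * L0\<^sup>2 * ((2 * real l + 1) ^ 3 * C l)"
          by (simp add: power2_eq_square power3_eq_cube algebra_simps)
      qed
      also have "\<dots> = h\<^sup>2 * L0\<^sup>2 * (\<Sum>l\<in>{..<n}. (2 * real l + 1) ^ 3 * C l)" by (simp add: sum_distrib_left)
      also have "\<dots> \<le> h\<^sup>2 * L0\<^sup>2 * SS" unfolding SS_def
        using C_nonneg[OF G] by (intro mult_left_mono sum_le_suminf SC) auto
      finally show "(\<Sum>l\<in>{..<n}. (cmod (d l))\<^sup>2 * C l * (2 * real l + 1)) \<le> h\<^sup>2 * L0\<^sup>2 * SS" .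
    qed
    finally show ?thesis .
  qed
  have "(\<integral>\<^sup>+\<omega>. \<integral>\<^sup>+p. F p \<omega> \<partial>lb2 \<partial>M) \<le> (\<integral>\<^sup>+\<omega>. liminf (\<lambda>n. \<integral>\<^sup>+p. Gn n p \<omega> \<partial>lb2) \<partial>M)"
    by (rule nn_integral_mono_AE[OF AEpt])
  also have "\<dots> \<le> liminf (\<lambda>n. \<integral>\<^sup>+\<omega>. \<integral>\<^sup>+p. Gn n p \<omega> \<partial>lb2 \<partial>M)" by (rule nn_integral_liminf) (rule Gm2)
  also have "\<dots> \<le> liminf (\<lambda>n. ennreal (h\<^sup>2 * L0\<^sup>2 * SS))" by (rule Liminf_mono) (simp add: bnd)
  also have "\<dots> = ennreal (h\<^sup>2 * L0\<^sup>2 * SS)" by (rule Liminf_const) simp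
  finally show ?thesis unfolding F_def .
qed

end


theorem theorem4:
  fixes M :: "'a measure" and C :: "nat \<Rightarrow> real"
    and a :: "nat \<Rightarrow> int \<Rightarrow> 'a \<Rightarrow> complex" and c D k :: real
  assumes "0 < c" and "0 < D" and "0 < k"
    and "gaussian_isotropic_coeffs M C a"
    and "summable (\<lambda>l. (2 * real l + 1) ^ 3 * C l)"
  shows "\<exists>K>0. \<forall>t>0. \<forall>\<^sub>F h in at_right 0.
           L2_sphere_norm M (\<lambda>\<theta> \<phi> \<omega>. sol a c D k \<theta> \<phi> (t + h) \<omega> - sol a c D k \<theta> \<phi> t \<omega>)
             \<le> ennreal (K * h)"
proof -
  note c = assms(1) and D = assms(2) and k = assms(3) and G = assms(4) and SC = assms(5)
  define L where "L = L0 c D k"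
  define S where "S = SS C"
  have L0: "0 \<le> L" unfolding L_def by (rule L0_nonneg[OF G SC c D k])
  have S0: "0 \<le> S" unfolding S_def by (rule SS_nonneg[OF G SC c D k])
  define K where "K = L * sqrt S + 1"
  have Kp: "0 < K" unfolding K_def using L0 S0 by (simp add: add_nonneg_pos)
  have main: "L2_sphere_norm M (\<lambda>\<theta> \<phi> \<omega>. sol a c D k \<theta> \<phi> (t + h) \<omega> - sol a c D k \<theta> \<phi> t \<omega>) \<le> ennreal (K * h)"
    if t: "0 < t" and h: "0 < h" for t h
  proof -
    define X where "X \<theta> \<phi> \<omega> = sol a c D k \<theta> \<phi> (t + h) \<omega> - sol a c D k \<theta> \<phi> t \<omega>" for \<theta> \<phi> \<omega>
    define I where "I = (\<integral>\<^sup>+ \<omega>. (\<integral>\<^sup>+ p. indicator ({0..<pi} \<times> {0..<2 * pi}) p *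
                  ennreal ((cmod (X (fst p) (snd p) \<omega>))\<^sup>2 * sin (fst p)) \<partial>lborel) \<partial>M)"
    have pw: "indicator ({0..<pi} \<times> {0..<2 * pi}) p * ennreal ((cmod (X (fst p) (snd p) \<omega>))\<^sup>2 * sin (fst p))
        = ennreal (wt p * (cmod (X (fst p) (snd p) \<omega>))\<^sup>2)" for p \<omega>
      unfolding wt_def by (auto simp: indicator_def mult.commute)
    have "I = (\<integral>\<^sup>+ \<omega>. (\<integral>\<^sup>+ p. ennreal (wt p * (cmod (X (fst p) (snd p) \<omega>))\<^sup>2) \<partial>lb2) \<partial>M)"
      unfolding I_def pw lborel_prod ..
    also have "\<dots> \<le> ennreal (h\<^sup>2 * L\<^sup>2 * S)"
      unfolding X_def L_def S_def by (rule I_bound[OF G SC c D k t h])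
    finally have Ile: "I \<le> ennreal (h\<^sup>2 * L\<^sup>2 * S)" .
    then have Ifin: "I \<noteq> \<infinity>" using neq_top_trans[OF ennreal_neq_top Ile] by simp
    have "enn2real I \<le> h\<^sup>2 * L\<^sup>2 * S"
      using enn2real_mono[OF Ile] L0 S0 by simp
    then have "sqrt (enn2real I) \<le> sqrt (h\<^sup>2 * L\<^sup>2 * S)" by (rule real_sqrt_le_mono)
    also have "\<dots> = h * L * sqrt S" using h L0 by (simp add: real_sqrt_mult)
    also have "\<dots> \<le> K * h" unfolding K_def using h by (simp add: algebra_simps)
    finally have "sqrt (enn2real I) \<le> K * h" .
    then have "ennreal (sqrt (enn2real I)) \<le> ennreal (K * h)" by (rule ennreal_leI)
    then show ?thesis unfolding L2_sphere_norm_def Let_def I_def[symmetric] X_def[symmetric] using Ifin by simp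
  qed
  show ?thesis
  proof (intro exI[of _ K] conjI allI impI Kp)
    fix t :: real assume t: "0 < t"
    show "\<forall>\<^sub>F h in at_right 0. L2_sphere_norm M (\<lambda>\<theta> \<phi> \<omega>. sol a c D k \<theta> \<phi> (t + h) \<omega> - sol a c D k \<theta> \<phi> t \<omega>) \<le> ennreal (K * h)"
      by (rule eventually_at_rightI[of 0 1]) (auto intro!: main t)
  qed
qed

end
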